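(* Let $(M,d)$ be a pointed metric space such that $\mathcal F(M)$ has the Krein–Milman property and every extreme point of $B_{\mathcal F(M)}$ is a molecule. Then every $f\in\mathrm{Lip}_0(M)$ which attains its norm as a functional on $\mathcal F(M)$ strongly attains its norm, i.e. there are $x\neq y$ in $M$ with $|f(x)-f(y)|=\|f\|_L\,d(x,y)$. In other words, $NA(\mathcal F(M),\mathbb R)=\mathrm{Lip}_{SNA}(M,\mathbb R)$. Consequently $\mathrm{Lip}_{SNA}(M,\mathbb R)$ is norm dense in $\mathrm{Lip}_0(M)$.
   Context: A pointed metric space $M$ has a distinguished origin $0$. $\mathrm{Lip}_0(M)$ is the Banach space of real Lipschitz functions on $M$ vanishing at $0$ with the best Lipschitz constant $\|\cdot\|_L$ as norm; $\delta(x)$ is evaluation at $x$, and the Lipschitz free space $\mathcal F(M)$ is the closed linear span of $\delta(M)$ in $\mathrm{Lip}_0(M)^*$, with $\mathcal F(M)^*=\mathrm{Lip}_0(M)$. Molecules are $m_{xy}=(\delta(x)-\delta(y))/d(x,y)$, $x\ne y$. $NA(\mathcal F(M),\mathbb R)$ is the set of $f\in\mathrm{Lip}_0(M)=\mathcal F(M)^*$ attaining their norm on $B_{\mathcal F(M)}$; $\mathrm{Lip}_{SNA}(M,\mathbb R)$ is the set of $f\in\mathrm{Lip}_0(M)$ for which there exist $x\neq y$ with $|f(x)-f(y)|=\|f\|_L d(x,y)$. A Banach space has the Krein–Milman property if every nonempty closed convex bounded subset has an extreme point. *)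

theory Defs
  imports "HOL-Analysis.Analysis"
begin

text \<open>Pointed metric space: carrier M, metric d, base point p in M.
  Lipschitz functions are represented as functions 'a => real vanishing outside M
  (so that the representation is unique).\<close>

definition Lip0 :: "'a set \<Rightarrow> ('a \<Rightarrow> 'a \<Rightarrow> real) \<Rightarrow> 'a \<Rightarrow> ('a \<Rightarrow> real) set" where
  "Lip0 M d p = {f. (\<forall>x. x \<notin> M \<longrightarrow> f x = 0) \<and> f p = 0 \<and>
      (\<exists>L. \<forall>x\<in>M. \<forall>y\<in>M. \<bar>f x - f y\<bar> \<le> L * d x y)}"

definition lipnorm :: "'a set \<Rightarrow> ('a \<Rightarrow> 'a \<Rightarrow> real) \<Rightarrow> ('a \<Rightarrow> real) \<Rightarrow> real" where
  "lipnorm M d f = Sup ({0} \<union> {\<bar>f x - f y\<bar> / d x y | x y. x \<in> M \<and> y \<in> M \<and> x \<noteq> y})"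

text \<open>Functionals on Lip_0(M), represented as maps vanishing outside Lip_0(M).\<close>
type_synonym 'a functional = "('a \<Rightarrow> real) \<Rightarrow> real"

definition delta :: "'a set \<Rightarrow> ('a \<Rightarrow> 'a \<Rightarrow> real) \<Rightarrow> 'a \<Rightarrow> 'a \<Rightarrow> 'a functional" where
  "delta M d p x = (\<lambda>f. if f \<in> Lip0 M d p then f x else 0)"

definition dnorm :: "'a set \<Rightarrow> ('a \<Rightarrow> 'a \<Rightarrow> real) \<Rightarrow> 'a \<Rightarrow> 'a functional \<Rightarrow> real" where
  "dnorm M d p \<phi> = Sup ({0} \<union> {\<bar>\<phi> f\<bar> | f. f \<in> Lip0 M d p \<and> lipnorm M d f \<le> 1})"

definition delta_span :: "'a set \<Rightarrow> ('a \<Rightarrow> 'a \<Rightarrow> real) \<Rightarrow> 'a \<Rightarrow> 'a functional set" where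
  "delta_span M d p = {\<psi>. \<exists>S a. finite S \<and> S \<subseteq> M \<and>
        \<psi> = (\<lambda>f. \<Sum>x\<in>S. a x * delta M d p x f)}"

text \<open>Lipschitz free space: closure of the span of delta(M) in the dual norm.\<close>
definition FreeSp :: "'a set \<Rightarrow> ('a \<Rightarrow> 'a \<Rightarrow> real) \<Rightarrow> 'a \<Rightarrow> 'a functional set" where
  "FreeSp M d p = {\<phi>. (\<forall>g. g \<notin> Lip0 M d p \<longrightarrow> \<phi> g = 0) \<and>
      (\<forall>\<epsilon>>0. \<exists>\<psi>\<in>delta_span M d p. \<forall>f\<in>Lip0 M d p.
          \<bar>\<phi> f - \<psi> f\<bar> \<le> \<epsilon> * lipnorm M d f)}"

definition free_ball :: "'a set \<Rightarrow> ('a \<Rightarrow> 'a \<Rightarrow> real) \<Rightarrow> 'a \<Rightarrow> 'a functional set" where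
  "free_ball M d p = {\<phi> \<in> FreeSp M d p. dnorm M d p \<phi> \<le> 1}"

definition molecule :: "'a set \<Rightarrow> ('a \<Rightarrow> 'a \<Rightarrow> real) \<Rightarrow> 'a \<Rightarrow> 'a \<Rightarrow> 'a \<Rightarrow> 'a functional" where
  "molecule M d p x y = (\<lambda>f. (delta M d p x f - delta M d p y f) / d x y)"

definition fconvex :: "'a functional set \<Rightarrow> bool" where
  "fconvex C \<longleftrightarrow> (\<forall>\<phi>\<in>C. \<forall>\<psi>\<in>C. \<forall>t::real. 0 \<le> t \<and> t \<le> 1 \<longrightarrow>
       (\<lambda>f. t * \<phi> f + (1 - t) * \<psi> f) \<in> C)"

definition fextreme_point :: "'a functional set \<Rightarrow> 'a functional \<Rightarrow> bool" where
  "fextreme_point C e \<longleftrightarrow> e \<in> C \<and> (\<forall>\<phi>\<in>C. \<forall>\<psi>\<in>C. \<forall>t::real. 0 < t \<and> t < 1 \<and>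
       e = (\<lambda>f. t * \<phi> f + (1 - t) * \<psi> f) \<longrightarrow> \<phi> = \<psi>)"

definition free_KMP :: "'a set \<Rightarrow> ('a \<Rightarrow> 'a \<Rightarrow> real) \<Rightarrow> 'a \<Rightarrow> bool" where
  "free_KMP M d p \<longleftrightarrow> (\<forall>C. C \<subseteq> FreeSp M d p \<and> C \<noteq> {} \<and> fconvex C
      \<and> (\<exists>R. \<forall>\<phi>\<in>C. dnorm M d p \<phi> \<le> R)
      \<and> (\<forall>\<phi>\<in>FreeSp M d p. (\<forall>\<epsilon>>0. \<exists>\<psi>\<in>C. dnorm M d p (\<lambda>f. \<phi> f - \<psi> f) < \<epsilon>) \<longrightarrow> \<phi> \<in> C)
      \<longrightarrow> (\<exists>e. fextreme_point C e))"

definition NA_free :: "'a set \<Rightarrow> ('a \<Rightarrow> 'a \<Rightarrow> real) \<Rightarrow> 'a \<Rightarrow> ('a \<Rightarrow> real) set" where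
  "NA_free M d p = {f \<in> Lip0 M d p. \<exists>\<phi>\<in>free_ball M d p. \<bar>\<phi> f\<bar> = lipnorm M d f}"

definition Lip_SNA :: "'a set \<Rightarrow> ('a \<Rightarrow> 'a \<Rightarrow> real) \<Rightarrow> 'a \<Rightarrow> ('a \<Rightarrow> real) set" where
  "Lip_SNA M d p = {f \<in> Lip0 M d p. \<exists>x\<in>M. \<exists>y\<in>M. x \<noteq> y \<and>
       \<bar>f x - f y\<bar> = lipnorm M d f * d x y}"

end

theory Submission
  imports Defs
begin


definition hb_good :: "('b \<Rightarrow> real) set \<Rightarrow> (('b \<Rightarrow> real) \<Rightarrow> real) \<Rightarrow> (('b \<Rightarrow> real) \<times> real) set \<Rightarrow> bool" where
  "hb_good V q G \<longleftrightarrow> G \<subseteq> V \<times> UNIV \<and> ((\<lambda>_. 0), 0) \<in> G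
     \<and> (\<forall>x a y b. (x, a) \<in> G \<longrightarrow> (y, b) \<in> G \<longrightarrow> ((\<lambda>z. x z + y z), a + b) \<in> G)
     \<and> (\<forall>x a c. (x, a) \<in> G \<longrightarrow> ((\<lambda>z. c * x z), c * a) \<in> G)
     \<and> (\<forall>x a b. (x, a) \<in> G \<longrightarrow> (x, b) \<in> G \<longrightarrow> a = b)
     \<and> (\<forall>x a. (x, a) \<in> G \<longrightarrow> a \<le> q x)"

lemma hb_goodD:
  assumes "hb_good V q G"
  shows "G \<subseteq> V \<times> UNIV" "((\<lambda>_. 0), 0) \<in> G"
    "\<And>x a y b. (x, a) \<in> G \<Longrightarrow> (y, b) \<in> G \<Longrightarrow> ((\<lambda>z. x z + y z), a + b) \<in> G"
    "\<And>x a c. (x, a) \<in> G \<Longrightarrow> ((\<lambda>z. c * x z), c * a) \<in> G"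
    "\<And>x a b. (x, a) \<in> G \<Longrightarrow> (x, b) \<in> G \<Longrightarrow> a = b"
    "\<And>x a. (x, a) \<in> G \<Longrightarrow> a \<le> q x"
  using assms unfolding hb_good_def by blast+

lemma HB:
  fixes V :: "('b \<Rightarrow> real) set" and q :: "('b \<Rightarrow> real) \<Rightarrow> real"
  assumes V0: "(\<lambda>_. 0) \<in> V"
    and Vadd: "\<And>x y. x \<in> V \<Longrightarrow> y \<in> V \<Longrightarrow> (\<lambda>b. x b + y b) \<in> V"
    and Vsc: "\<And>x c. x \<in> V \<Longrightarrow> (\<lambda>b. c * x b) \<in> V"
    and qsub: "\<And>x y. x \<in> V \<Longrightarrow> y \<in> V \<Longrightarrow> q (\<lambda>b. x b + y b) \<le> q x + q y"
    and qhom: "\<And>x c. x \<in> V \<Longrightarrow> c > 0 \<Longrightarrow> q (\<lambda>b. c * x b) = c * q x"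
  shows "\<exists>h. (\<forall>x\<in>V. \<forall>y\<in>V. h (\<lambda>b. x b + y b) = h x + h y) \<and> (\<forall>x\<in>V. \<forall>c. h (\<lambda>b. c * x b) = c * h x)
             \<and> (\<forall>x\<in>V. h x \<le> q x)"
proof -
  have Vdiff: "(\<lambda>b. x b - y b) \<in> V" if "x \<in> V" "y \<in> V" for x y
    using Vadd[OF that(1) Vsc[OF that(2), of "-1"]] by simp
  have q0: "q (\<lambda>_. 0) = 0"
    using qhom[OF V0, of 2] by simp
  define A where "A = {G. hb_good V q G}"
  have "\<exists>Gm\<in>A. \<forall>X\<in>A. Gm \<subseteq> X \<longrightarrow> X = Gm"
  proof (rule Zorn_Lemma2, intro ballI)
    fix C assume C: "C \<in> chains A"
    show "\<exists>U\<in>A. \<forall>X\<in>C. X \<subseteq> U"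
    proof (cases "C = {}")
      case True
      have "hb_good V q {((\<lambda>_. 0), 0)}" unfolding hb_good_def using V0 q0 by auto
      then show ?thesis using True unfolding A_def by blast
    next
      case False
      have CA: "C \<subseteq> A" using C chainsD2 by blast
      have cmp: "X \<subseteq> Y \<or> Y \<subseteq> X" if "X \<in> C" "Y \<in> C" for X Y using chainsD[OF C that] .
      have gd: "hb_good V q X" if "X \<in> C" for X using CA that unfolding A_def by blast
      have "hb_good V q (\<Union>C)" unfolding hb_good_def
      proof (intro conjI allI impI)
        show "\<Union>C \<subseteq> V \<times> UNIV" using gd hb_goodD(1) by blast
        obtain X where "X \<in> C" using False by blast
        then show "((\<lambda>_. 0), 0) \<in> \<Union>C" using gd hb_goodD(2) by blast
      next
        fix x a y b assume "(x, a) \<in> \<Union>C" "(y, b) \<in> \<Union>C"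
        then obtain X Y where "X \<in> C" "Y \<in> C" "(x, a) \<in> X" "(y, b) \<in> Y" by blast
        then obtain Z where "Z \<in> C" "(x, a) \<in> Z" "(y, b) \<in> Z" using cmp by blast
        then show "((\<lambda>z. x z + y z), a + b) \<in> \<Union>C" using hb_goodD(3,5)[OF gd[of Z]] by blast
      next
        fix x a c assume "(x, a) \<in> \<Union>C"
        then obtain X where "X \<in> C" "(x, a) \<in> X" by blast
        then show "((\<lambda>z. c * x z), c * a) \<in> \<Union>C" using hb_goodD(4,6)[OF gd[of X]] by blast
      next
        fix x a b assume "(x, a) \<in> \<Union>C" "(x, b) \<in> \<Union>C"
        then obtain X Y where "X \<in> C" "Y \<in> C" "(x, a) \<in> X" "(x, b) \<in> Y" by blast
        then obtain Z where "Z \<in> C" "(x, a) \<in> Z" "(x, b) \<in> Z" using cmp by blast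
        then show "a = b" using hb_goodD(3,5)[OF gd[of Z]] by blast
      next
        fix x a assume "(x, a) \<in> \<Union>C"
        then obtain X where "X \<in> C" "(x, a) \<in> X" by blast
        then show "a \<le> q x" using hb_goodD(4,6)[OF gd[of X]] by blast
      qed
      then show ?thesis unfolding A_def by blast
    qed
  qed
  then obtain Gm where GmA: "Gm \<in> A" and max: "\<And>X. X \<in> A \<Longrightarrow> Gm \<subseteq> X \<Longrightarrow> X = Gm" by blast
  have G: "hb_good V q Gm" using GmA unfolding A_def by simp
  have GV: "(x, a) \<in> Gm \<Longrightarrow> x \<in> V" for x a using hb_goodD(1)[OF G] by blast
  note G0 = hb_goodD(2)[OF G]
  note Gadd = hb_goodD(3)[OF G]
  note Gsc = hb_goodD(4)[OF G]
  note Gfun = hb_goodD(5)[OF G]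
  note Gdom = hb_goodD(6)[OF G]
  have Gdiff: "(x, a) \<in> Gm \<Longrightarrow> (y, b) \<in> Gm \<Longrightarrow> ((\<lambda>z. x z - y z), a - b) \<in> Gm" for x a y b
    using Gadd[of x a "\<lambda>z. (-1) * y z" "(-1) * b"] Gsc[of y b "-1"] by simp
  have total: "\<exists>a. (v, a) \<in> Gm" if vV: "v \<in> V" for v
  proof (rule ccontr)
    assume nv: "\<not> (\<exists>a. (v, a) \<in> Gm)"
    define S where "S = {a - q (\<lambda>z. w z - v z) | w a. (w, a) \<in> Gm}"
    have key: "a' - q (\<lambda>z. w' z - v z) \<le> q (\<lambda>z. w z + v z) - a"
      if "(w, a) \<in> Gm" "(w', a') \<in> Gm" for w a w' a'
    proof -
      have "a' + a \<le> q (\<lambda>z. w' z + w z)" using Gdom[OF Gadd[OF that(2) that(1)]] .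
      also have "(\<lambda>z. w' z + w z) = (\<lambda>z. (w' z - v z) + (w z + v z))" by simp
      also have "q \<dots> \<le> q (\<lambda>z. w' z - v z) + q (\<lambda>z. w z + v z)"
        using qsub[OF Vdiff[OF GV[OF that(2)] vV] Vadd[OF GV[OF that(1)] vV]] by simp
      finally show ?thesis by simp
    qed
    have Sne: "S \<noteq> {}" unfolding S_def using G0 by blast
    have Sbdd: "bdd_above S"
    proof (rule bdd_aboveI[where M="q (\<lambda>z. 0 + v z)"])
      fix s assume "s \<in> S"
      then obtain w a where "(w, a) \<in> Gm" "s = a - q (\<lambda>z. w z - v z)" unfolding S_def by blast
      then show "s \<le> q (\<lambda>z. 0 + v z)" using key[OF G0, of w a] by simp
    qed
    define c0 where "c0 = Sup S"
    have c0_up: "a - q (\<lambda>z. w z - v z) \<le> c0" if "(w, a) \<in> Gm" for w a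
      unfolding c0_def using that Sbdd by (intro cSup_upper) (auto simp: S_def)
    have c0_low: "c0 \<le> q (\<lambda>z. w z + v z) - a" if "(w, a) \<in> Gm" for w a
      unfolding c0_def
    proof (rule cSup_least[OF Sne])
      fix s assume "s \<in> S"
      then obtain w' a' where "(w', a') \<in> Gm" "s = a' - q (\<lambda>z. w' z - v z)" unfolding S_def by blast
      then show "s \<le> q (\<lambda>z. w z + v z) - a" using key[OF that] by simp
    qed
    define G' where "G' = {((\<lambda>z. w z + t * v z), a + t * c0) | w a t. (w, a) \<in> Gm}"
    have memG': "((\<lambda>z. w z + t * v z), a + t * c0) \<in> G'" if "(w, a) \<in> Gm" for w a t
      unfolding G'_def using that by blast
    have good': "hb_good V q G'" unfolding hb_good_def
    proof (intro conjI allI impI)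
      show "G' \<subseteq> V \<times> UNIV" unfolding G'_def using GV Vadd Vsc vV by blast
      show "((\<lambda>_. 0), 0) \<in> G'" using memG'[OF G0, of 0] by simp
    next
      fix x a y b assume "(x, a) \<in> G'" "(y, b) \<in> G'"
      then obtain w1 a1 t1 w2 a2 t2 where
        1: "(w1, a1) \<in> Gm" "x = (\<lambda>z. w1 z + t1 * v z)" "a = a1 + t1 * c0" and
        2: "(w2, a2) \<in> Gm" "y = (\<lambda>z. w2 z + t2 * v z)" "b = a2 + t2 * c0"
        unfolding G'_def by blast
      show "((\<lambda>z. x z + y z), a + b) \<in> G'"
        using memG'[OF Gadd[OF 1(1) 2(1)], of "t1 + t2"] 1 2 by (simp add: algebra_simps)
    next
      fix x a c assume "(x, a) \<in> G'"
      then obtain w1 a1 t1 where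
        1: "(w1, a1) \<in> Gm" "x = (\<lambda>z. w1 z + t1 * v z)" "a = a1 + t1 * c0"
        unfolding G'_def by blast
      show "((\<lambda>z. c * x z), c * a) \<in> G'"
        using memG'[OF Gsc[OF 1(1), of c], of "c * t1"] 1 by (simp add: algebra_simps)
    next
      fix x a b assume "(x, a) \<in> G'" "(x, b) \<in> G'"
      then obtain w1 a1 t1 w2 a2 t2 where
        1: "(w1, a1) \<in> Gm" "x = (\<lambda>z. w1 z + t1 * v z)" "a = a1 + t1 * c0" and
        2: "(w2, a2) \<in> Gm" "x = (\<lambda>z. w2 z + t2 * v z)" "b = a2 + t2 * c0"
        unfolding G'_def by blast
      have eq: "w1 z + t1 * v z = w2 z + t2 * v z" for z using 1(2) 2(2) by metis
      show "a = b"
      proof (cases "t1 = t2")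
        case True
        then have "w1 = w2" using eq by (simp add: fun_eq_iff)
        then show ?thesis using Gfun[OF 1(1)] 2(1) True 1(3) 2(3) by simp
      next
        case False
        have veq: "v = (\<lambda>z. (1 / (t2 - t1)) * (w1 z - w2 z))"
        proof
          fix z have "w1 z - w2 z = (t2 - t1) * v z" using eq[of z] by (simp add: algebra_simps)
          then show "v z = (1 / (t2 - t1)) * (w1 z - w2 z)" using False by simp
        qed
        have "((\<lambda>z. (1 / (t2 - t1)) * (w1 z - w2 z)), (1 / (t2 - t1)) * (a1 - a2)) \<in> Gm"
          by (rule Gsc[OF Gdiff[OF 1(1) 2(1)]])
        then have "\<exists>a. (v, a) \<in> Gm" unfolding veq by blast
        then show ?thesis using nv by blast
      qed
    next
      fix x a assume "(x, a) \<in> G'"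
      then obtain w a1 t where
        1: "(w, a1) \<in> Gm" "x = (\<lambda>z. w z + t * v z)" "a = a1 + t * c0"
        unfolding G'_def by blast
      have wV: "w \<in> V" using GV[OF 1(1)] .
      show "a \<le> q x"
      proof (cases "t = 0")
        case True then show ?thesis using 1 Gdom[OF 1(1)] by simp
      next
        case False
        show ?thesis
        proof (cases "t > 0")
          case True
          have m: "((\<lambda>z. (1 / t) * w z), (1 / t) * a1) \<in> Gm" using Gsc[OF 1(1)] .
          have "c0 \<le> q (\<lambda>z. (1 / t) * w z + v z) - (1 / t) * a1" using c0_low[OF m] by simp
          then have "t * (c0 + (1 / t) * a1) \<le> t * q (\<lambda>z. (1 / t) * w z + v z)"
            using True by (intro mult_left_mono) auto
          also have "\<dots> = q (\<lambda>z. t * ((1 / t) * w z + v z))"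
            using qhom[OF Vadd[OF Vsc[OF wV, of "1 / t"] vV] True] by simp
          also have "(\<lambda>z. t * ((1 / t) * w z + v z)) = x" using 1(2) True by (simp add: fun_eq_iff algebra_simps)
          finally show ?thesis using 1(3) True by (simp add: algebra_simps)
        next
          case neg: False
          then have s: "- t > 0" using \<open>t \<noteq> 0\<close> by simp
          have m: "((\<lambda>z. (1 / (- t)) * w z), (1 / (- t)) * a1) \<in> Gm" using Gsc[OF 1(1)] .
          have "(1 / (- t)) * a1 - q (\<lambda>z. (1 / (- t)) * w z - v z) \<le> c0" using c0_up[OF m] by simp
          then have "(- t) * ((1 / (- t)) * a1 - c0) \<le> (- t) * q (\<lambda>z. (1 / (- t)) * w z - v z)"
            using s by (intro mult_left_mono) auto
          also have "\<dots> = q (\<lambda>z. (- t) * ((1 / (- t)) * w z - v z))"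
            using qhom[OF Vdiff[OF Vsc[OF wV, of "1 / (- t)"] vV] s] by simp
          also have "(\<lambda>z. (- t) * ((1 / (- t)) * w z - v z)) = x" using 1(2) s by (simp add: fun_eq_iff algebra_simps)
          finally show ?thesis using 1(3) s by (simp add: algebra_simps)
        qed
      qed
    qed
    have sub: "Gm \<subseteq> G'"
    proof
      fix xa assume "xa \<in> Gm"
      then obtain x a where xa: "xa = (x, a)" "(x, a) \<in> Gm" by (cases xa) auto
      show "xa \<in> G'" using memG'[OF xa(2), of 0] xa(1) by simp
    qed
    have "(v, c0) \<in> G'" using memG'[OF G0, of 1] by simp
    then have "G' \<noteq> Gm" using nv by blast
    then show False using max[of G'] good' sub unfolding A_def by blast
  qed
  define h where "h x = (SOME a. (x, a) \<in> Gm)" for x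
  have hG: "(x, h x) \<in> Gm" if "x \<in> V" for x
    unfolding h_def using total[OF that] by (rule someI_ex)
  show ?thesis
  proof (intro exI[of _ h] conjI ballI allI)
    fix x y assume "x \<in> V" "y \<in> V"
    then show "h (\<lambda>b. x b + y b) = h x + h y"
      using Gfun[OF hG[OF Vadd] Gadd[OF hG hG]] by blast
  next
    fix x c assume "x \<in> V"
    then show "h (\<lambda>b. c * x b) = c * h x"
      using Gfun[OF hG[OF Vsc] Gsc[OF hG]] by blast
  next
    fix x assume "x \<in> V"
    then show "h x \<le> q x" using Gdom[OF hG] by blast
  qed
qed



locale LF = Metric_space M d for M :: "'a set" and d :: "'a \<Rightarrow> 'a \<Rightarrow> real" +
  fixes p :: 'a
  assumes pM: "p \<in> M"
begin

abbreviation "L \<equiv> Lip0 M d p"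
abbreviation "nrm f \<equiv> lipnorm M d f"
abbreviation "N \<phi> \<equiv> dnorm M d p \<phi>"
abbreviation "F \<equiv> FreeSp M d p"
abbreviation "B \<equiv> free_ball M d p"

definition slopes :: "('a \<Rightarrow> real) \<Rightarrow> real set" where
  "slopes f = {\<bar>f x - f y\<bar> / d x y | x y. x \<in> M \<and> y \<in> M \<and> x \<noteq> y}"

lemma nrm_eq: "nrm f = Sup ({0} \<union> slopes f)"
  by (simp add: lipnorm_def slopes_def)

lemma L_out: "f \<in> L \<Longrightarrow> x \<notin> M \<Longrightarrow> f x = 0"
  by (simp add: Lip0_def)

lemma L_p: "f \<in> L \<Longrightarrow> f p = 0"
  by (simp add: Lip0_def)

lemma slopes_bdd:
  assumes "f \<in> L" shows "bdd_above ({0} \<union> slopes f)"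
proof -
  obtain K where K: "\<forall>x\<in>M. \<forall>y\<in>M. \<bar>f x - f y\<bar> \<le> K * d x y"
    using assms by (auto simp: Lip0_def)
  have "s \<le> K" if sS: "s \<in> slopes f" for s
  proof -
    obtain x y where xy: "x \<in> M" "y \<in> M" "x \<noteq> y" "s = \<bar>f x - f y\<bar> / d x y"
      using sS unfolding slopes_def by blast
    have "0 < d x y" using xy mdist_pos_less by auto
    then show ?thesis using K xy by (simp add: divide_le_eq)
  qed
  then show ?thesis by (auto intro!: bdd_aboveI[where M="max 0 K"] simp: le_max_iff_disj)
qed

lemma nrm_nonneg: "f \<in> L \<Longrightarrow> 0 \<le> nrm f"
  unfolding nrm_eq by (rule cSup_upper2[of 0, OF _ _ slopes_bdd]) auto

lemma nrm_lip:
  assumes "f \<in> L" "x \<in> M" "y \<in> M"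
  shows "\<bar>f x - f y\<bar> \<le> nrm f * d x y"
proof (cases "x = y")
  case True then show ?thesis using nrm_nonneg[OF assms(1)] assms by simp
next
  case False
  have "\<bar>f x - f y\<bar> / d x y \<le> nrm f"
    unfolding nrm_eq using assms False
    by (intro cSup_upper slopes_bdd) (auto simp: slopes_def)
  moreover have "0 < d x y" using assms False mdist_pos_less by auto
  ultimately show ?thesis by (simp add: divide_le_eq)
qed

lemma nrm_le:
  assumes "0 \<le> K" "\<And>x y. x \<in> M \<Longrightarrow> y \<in> M \<Longrightarrow> x \<noteq> y \<Longrightarrow> \<bar>f x - f y\<bar> \<le> K * d x y"
  shows "nrm f \<le> K"
  unfolding nrm_eq
proof (rule cSup_least)
  show "{0} \<union> slopes f \<noteq> {}" by simp
  fix s assume "s \<in> {0} \<union> slopes f"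
  then show "s \<le> K"
  proof
    assume "s \<in> {0}" then show ?thesis using assms by simp
  next
    assume "s \<in> slopes f"
    then obtain x y where xy: "x \<in> M" "y \<in> M" "x \<noteq> y" "s = \<bar>f x - f y\<bar> / d x y"
      unfolding slopes_def by blast
    have "0 < d x y" using xy mdist_pos_less by auto
    then show ?thesis using assms(2)[OF xy(1-3)] xy by (simp add: divide_le_eq)
  qed
qed

lemma slope_le_nrm:
  assumes "x \<in> M" "y \<in> M" "x \<noteq> y" "f \<in> L"
  shows "\<bar>f x - f y\<bar> / d x y \<le> nrm f"
  unfolding nrm_eq using assms
  by (intro cSup_upper slopes_bdd) (auto simp: slopes_def)

lemma L_add: "f \<in> L \<Longrightarrow> g \<in> L \<Longrightarrow> (\<lambda>x. f x + g x) \<in> L"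
proof -
  assume f: "f \<in> L" and g: "g \<in> L"
  have "\<bar>(f x + g x) - (f y + g y)\<bar> \<le> (nrm f + nrm g) * d x y" if "x \<in> M" "y \<in> M" for x y
    using nrm_lip[OF f that] nrm_lip[OF g that] abs_triangle_ineq[of "f x - f y" "g x - g y"]
    by (simp add: algebra_simps)
  then show ?thesis using f g by (auto simp: Lip0_def)
qed

lemma L_scale: "f \<in> L \<Longrightarrow> (\<lambda>x. c * f x) \<in> L"
proof -
  assume f: "f \<in> L"
  have "\<bar>c * f x - c * f y\<bar> \<le> (\<bar>c\<bar> * nrm f) * d x y" if "x \<in> M" "y \<in> M" for x y
    using nrm_lip[OF f that] by (simp add: right_diff_distrib[symmetric] abs_mult mult.assoc mult_left_mono)
  then show ?thesis using f by (auto simp: Lip0_def)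
qed

lemma nrm_scale: "f \<in> L \<Longrightarrow> nrm (\<lambda>x. c * f x) \<le> \<bar>c\<bar> * nrm f"
  apply (rule nrm_le)
  using nrm_nonneg apply simp
  using nrm_lip by (simp add: right_diff_distrib[symmetric] abs_mult mult.assoc mult_left_mono)

lemma L_zero: "(\<lambda>_. 0) \<in> L"
  by (auto simp: Lip0_def intro: exI[of _ 0])

lemma L_minus: "f \<in> L \<Longrightarrow> g \<in> L \<Longrightarrow> (\<lambda>x. f x - g x) \<in> L"
  using L_add[of f "\<lambda>x. (-1) * g x"] L_scale[of g "-1"] by simp

lemma nrm_add: "f \<in> L \<Longrightarrow> g \<in> L \<Longrightarrow> nrm (\<lambda>x. f x + g x) \<le> nrm f + nrm g"
  apply (rule nrm_le)
  using nrm_nonneg apply (simp add: add_nonneg_nonneg)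
  subgoal for x y
    using nrm_lip[of f x y] nrm_lip[of g x y] abs_triangle_ineq[of "f x - f y" "g x - g y"]
    by (simp add: algebra_simps)
  done

lemma nrm_zero_imp: assumes "f \<in> L" "nrm f = 0" shows "f = (\<lambda>_. 0)"
proof
  fix x show "f x = 0"
  proof (cases "x \<in> M")
    case True then show ?thesis using nrm_lip[OF assms(1) True pM] assms by (simp add: L_p)
  next
    case False then show ?thesis using assms by (simp add: L_out)
  qed
qed

lemma zero_by_eps: assumes "\<And>e. e > 0 \<Longrightarrow> \<bar>X\<bar> \<le> e * K" "0 \<le> (K::real)" shows "X = 0"
proof (rule ccontr)
  assume "X \<noteq> 0"
  then have pos: "\<bar>X\<bar> > 0" by simp
  have "\<bar>X\<bar> \<le> (\<bar>X\<bar> / (K + 1)) * K" using assms(1)[of "\<bar>X\<bar> / (K + 1)"] pos assms(2) by simp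
  also have "\<dots> < \<bar>X\<bar>" using pos assms(2) by (simp add: field_simps)
  finally show False by simp
qed

lemma le_by_eps: assumes "\<And>e. e > 0 \<Longrightarrow> X \<le> Y + e * K" "0 \<le> (K::real)" shows "X \<le> Y"
proof (rule ccontr)
  assume "\<not> X \<le> Y"
  then have pos: "X - Y > 0" by simp
  have "X \<le> Y + ((X - Y) / (K + 1)) * K" using assms(1)[of "(X - Y) / (K + 1)"] pos assms(2) by simp
  moreover have "((X - Y) / (K + 1)) * K < X - Y" using pos assms(2) by (simp add: field_simps)
  ultimately show False by simp
qed

lemma delta_L: "f \<in> L \<Longrightarrow> delta M d p x f = f x"
  by (simp add: delta_def)

lemma span_form: "\<psi> \<in> delta_span M d p \<Longrightarrow>
   \<exists>S a. finite S \<and> S \<subseteq> M \<and> (\<forall>f\<in>L. \<psi> f = (\<Sum>x\<in>S. a x * f x))"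
proof -
  assume "\<psi> \<in> delta_span M d p"
  then obtain S a where "finite S" "S \<subseteq> M" "\<psi> = (\<lambda>f. \<Sum>x\<in>S. a x * delta M d p x f)"
    unfolding delta_span_def by blast
  then show ?thesis by (intro exI[of _ S] exI[of _ a]) (simp add: delta_def)
qed

lemma span_add: assumes "f \<in> L" "g \<in> L" "\<psi> \<in> delta_span M d p"
  shows "\<psi> (\<lambda>x. f x + g x) = \<psi> f + \<psi> g"
proof -
  obtain S a where "finite S" "S \<subseteq> M" "\<forall>f\<in>L. \<psi> f = (\<Sum>x\<in>S. a x * f x)"
    using span_form[OF assms(3)] by blast
  then show ?thesis using assms L_add[OF assms(1,2)] by (simp add: distrib_left sum.distrib)
qed

lemma span_scale: assumes "f \<in> L" "\<psi> \<in> delta_span M d p"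
  shows "\<psi> (\<lambda>x. c * f x) = c * \<psi> f"
proof -
  obtain S a where "finite S" "S \<subseteq> M" "\<forall>f\<in>L. \<psi> f = (\<Sum>x\<in>S. a x * f x)"
    using span_form[OF assms(2)] by blast
  then show ?thesis using assms L_scale[OF assms(1)] by (simp add: sum_distrib_left algebra_simps)
qed

lemma F_approx: "\<phi> \<in> F \<Longrightarrow> e > 0 \<Longrightarrow> \<exists>\<psi>\<in>delta_span M d p. \<forall>f\<in>L. \<bar>\<phi> f - \<psi> f\<bar> \<le> e * nrm f"
  by (simp add: FreeSp_def)

lemma F_out: "\<phi> \<in> F \<Longrightarrow> g \<notin> L \<Longrightarrow> \<phi> g = 0"
  by (simp add: FreeSp_def)

lemma F_add: assumes "\<phi> \<in> F" "f \<in> L" "g \<in> L"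
  shows "\<phi> (\<lambda>x. f x + g x) = \<phi> f + \<phi> g"
proof -
  have "\<phi> (\<lambda>x. f x + g x) - (\<phi> f + \<phi> g) = 0"
  proof (rule zero_by_eps)
    fix e :: real assume e: "e > 0"
    obtain \<psi> where \<psi>: "\<psi> \<in> delta_span M d p" "\<forall>f\<in>L. \<bar>\<phi> f - \<psi> f\<bar> \<le> e * nrm f"
      using F_approx[OF assms(1) e] by blast
    have "\<bar>\<phi> (\<lambda>x. f x + g x) - (\<phi> f + \<phi> g)\<bar>
       = \<bar>(\<phi> (\<lambda>x. f x + g x) - \<psi> (\<lambda>x. f x + g x)) - (\<phi> f - \<psi> f) - (\<phi> g - \<psi> g)\<bar>"
      using span_add[OF assms(2,3) \<psi>(1)] by simp
    also have "\<dots> \<le> e * nrm (\<lambda>x. f x + g x) + e * nrm f + e * nrm g"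
    proof -
      have h1: "\<bar>\<phi> (\<lambda>x. f x + g x) - \<psi> (\<lambda>x. f x + g x)\<bar> \<le> e * nrm (\<lambda>x. f x + g x)"
        using \<psi>(2) L_add[OF assms(2,3)] by blast
      have h2: "\<bar>\<phi> f - \<psi> f\<bar> \<le> e * nrm f" using \<psi>(2) assms(2) by blast
      have h3: "\<bar>\<phi> g - \<psi> g\<bar> \<le> e * nrm g" using \<psi>(2) assms(3) by blast
      show ?thesis using h1 h2 h3 by (smt (verit))
    qed
    finally show "\<bar>\<phi> (\<lambda>x. f x + g x) - (\<phi> f + \<phi> g)\<bar> \<le> e * (nrm (\<lambda>x. f x + g x) + nrm f + nrm g)"
      by (simp add: algebra_simps)
  next
    show "0 \<le> nrm (\<lambda>x. f x + g x) + nrm f + nrm g"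
      using nrm_nonneg assms L_add by (simp add: add_nonneg_nonneg)
  qed
  then show ?thesis by simp
qed

lemma F_scale: assumes "\<phi> \<in> F" "f \<in> L"
  shows "\<phi> (\<lambda>x. c * f x) = c * \<phi> f"
proof -
  have "\<phi> (\<lambda>x. c * f x) - c * \<phi> f = 0"
  proof (rule zero_by_eps)
    fix e :: real assume e: "e > 0"
    obtain \<psi> where \<psi>: "\<psi> \<in> delta_span M d p" "\<forall>f\<in>L. \<bar>\<phi> f - \<psi> f\<bar> \<le> e * nrm f"
      using F_approx[OF assms(1) e] by blast
    have "\<bar>\<phi> (\<lambda>x. c * f x) - c * \<phi> f\<bar>
       = \<bar>(\<phi> (\<lambda>x. c * f x) - \<psi> (\<lambda>x. c * f x)) - c * (\<phi> f - \<psi> f)\<bar>"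
      using span_scale[OF assms(2) \<psi>(1)] by (simp add: algebra_simps)
    also have "\<dots> \<le> e * nrm (\<lambda>x. c * f x) + \<bar>c\<bar> * (e * nrm f)"
    proof -
      have h1: "\<bar>\<phi> (\<lambda>x. c * f x) - \<psi> (\<lambda>x. c * f x)\<bar> \<le> e * nrm (\<lambda>x. c * f x)"
        using \<psi>(2) L_scale[OF assms(2)] by blast
      have h2: "\<bar>\<phi> f - \<psi> f\<bar> \<le> e * nrm f" using \<psi>(2) assms(2) by blast
      have h3: "\<bar>c * (\<phi> f - \<psi> f)\<bar> \<le> \<bar>c\<bar> * (e * nrm f)"
        unfolding abs_mult by (rule mult_left_mono[OF h2]) simp
      show ?thesis using h1 h3 by (smt (verit))
    qed
    finally show "\<bar>\<phi> (\<lambda>x. c * f x) - c * \<phi> f\<bar> \<le> e * (nrm (\<lambda>x. c * f x) + \<bar>c\<bar> * nrm f)"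
      by (simp add: algebra_simps)
  next
    show "0 \<le> nrm (\<lambda>x. c * f x) + \<bar>c\<bar> * nrm f"
      using nrm_nonneg assms L_scale by (simp add: add_nonneg_nonneg)
  qed
  then show ?thesis by simp
qed

lemma F_zero_fun: "\<phi> \<in> F \<Longrightarrow> \<phi> (\<lambda>_. 0) = 0"
  using F_scale[of \<phi> "\<lambda>_. 0" 0] L_zero by simp

lemma F_bnd: assumes "\<phi> \<in> F" shows "\<exists>C. \<forall>g\<in>L. \<bar>\<phi> g\<bar> \<le> C * nrm g"
proof -
  obtain \<psi> where \<psi>: "\<psi> \<in> delta_span M d p" "\<forall>f\<in>L. \<bar>\<phi> f - \<psi> f\<bar> \<le> 1 * nrm f"
    using F_approx[OF assms, of 1] by auto
  obtain S a where S: "finite S" "S \<subseteq> M" "\<forall>f\<in>L. \<psi> f = (\<Sum>x\<in>S. a x * f x)"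
    using span_form[OF \<psi>(1)] by blast
  have "\<bar>\<phi> g\<bar> \<le> (1 + (\<Sum>x\<in>S. \<bar>a x\<bar> * d x p)) * nrm g" if g: "g \<in> L" for g
  proof -
    have "\<bar>\<psi> g\<bar> \<le> (\<Sum>x\<in>S. \<bar>a x * g x\<bar>)" using S g by (simp add: sum_abs)
    also have "\<dots> \<le> (\<Sum>x\<in>S. \<bar>a x\<bar> * d x p * nrm g)"
    proof (rule sum_mono)
      fix x assume "x \<in> S"
      then have "\<bar>g x\<bar> \<le> nrm g * d x p" using nrm_lip[OF g _ pM, of x] S(2) g by (auto simp: L_p)
      then have "\<bar>a x\<bar> * \<bar>g x\<bar> \<le> \<bar>a x\<bar> * (nrm g * d x p)" by (intro mult_left_mono) auto
      then show "\<bar>a x * g x\<bar> \<le> \<bar>a x\<bar> * d x p * nrm g"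
        by (simp add: abs_mult algebra_simps)
    qed
    also have "\<dots> = (\<Sum>x\<in>S. \<bar>a x\<bar> * d x p) * nrm g" by (simp add: sum_distrib_right)
    finally have "\<bar>\<psi> g\<bar> \<le> (\<Sum>x\<in>S. \<bar>a x\<bar> * d x p) * nrm g" .
    moreover have "\<bar>\<phi> g - \<psi> g\<bar> \<le> 1 * nrm g" using \<psi>(2) g by blast
    ultimately show ?thesis by (simp add: algebra_simps)
  qed
  then show ?thesis by blast
qed

lemma N_eq: "N \<phi> = Sup ({0} \<union> {\<bar>\<phi> f\<bar> | f. f \<in> L \<and> nrm f \<le> 1})"
  by (simp add: dnorm_def)

lemma N_least: assumes "0 \<le> K" "\<And>f. f \<in> L \<Longrightarrow> nrm f \<le> 1 \<Longrightarrow> \<bar>\<phi> f\<bar> \<le> K"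
  shows "N \<phi> \<le> K"
  unfolding N_eq by (rule cSup_least) (use assms in auto)

lemma N_bdd: assumes "\<phi> \<in> F" shows "bdd_above ({0} \<union> {\<bar>\<phi> f\<bar> | f. f \<in> L \<and> nrm f \<le> 1})"
proof -
  obtain C where C: "\<forall>g\<in>L. \<bar>\<phi> g\<bar> \<le> C * nrm g" using F_bnd[OF assms] by blast
  have "\<bar>\<phi> f\<bar> \<le> \<bar>C\<bar>" if "f \<in> L" "nrm f \<le> 1" for f
  proof -
    have "C * nrm f \<le> \<bar>C\<bar> * nrm f" using nrm_nonneg[OF that(1)] by (simp add: mult_right_mono)
    also have "\<dots> \<le> \<bar>C\<bar>" using that(2) nrm_nonneg[OF that(1)] by (simp add: mult_left_le)
    finally show ?thesis using C that(1) by force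
  qed
  then show ?thesis by (intro bdd_aboveI[where M="\<bar>C\<bar>"]) auto
qed

lemma N_nonneg: "\<phi> \<in> F \<Longrightarrow> 0 \<le> N \<phi>"
  unfolding N_eq by (rule cSup_upper2[of 0, OF _ _ N_bdd]) auto

lemma N_upper: "\<phi> \<in> F \<Longrightarrow> f \<in> L \<Longrightarrow> nrm f \<le> 1 \<Longrightarrow> \<bar>\<phi> f\<bar> \<le> N \<phi>"
  unfolding N_eq by (rule cSup_upper[OF _ N_bdd]) auto

lemma N_bound: assumes "\<phi> \<in> F" "f \<in> L" shows "\<bar>\<phi> f\<bar> \<le> N \<phi> * nrm f"
proof (cases "nrm f = 0")
  case True
  then have "f = (\<lambda>_. 0)" using nrm_zero_imp assms by blast
  then show ?thesis using F_zero_fun[OF assms(1)] True by simp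
next
  case False
  then have pos: "nrm f > 0" using nrm_nonneg[OF assms(2)] by simp
  let ?g = "\<lambda>x. (1 / nrm f) * f x"
  have gL: "?g \<in> L" using L_scale assms by blast
  have "nrm ?g \<le> \<bar>1 / nrm f\<bar> * nrm f" using nrm_scale assms by blast
  also have "\<dots> = 1" using pos by simp
  finally have "\<bar>\<phi> ?g\<bar> \<le> N \<phi>" using N_upper[OF assms(1) gL] by blast
  moreover have "\<phi> ?g = \<phi> f / nrm f" using F_scale[OF assms, of "1 / nrm f"] by simp
  ultimately have "\<bar>\<phi> f\<bar> / nrm f \<le> N \<phi>" using pos by (simp add: abs_of_pos)
  then show ?thesis using pos by (simp add: divide_le_eq)
qed

lemma span_add_cl: assumes "\<psi>1 \<in> delta_span M d p" "\<psi>2 \<in> delta_span M d p"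
  shows "(\<lambda>f. \<psi>1 f + \<psi>2 f) \<in> delta_span M d p"
proof -
  obtain S1 a1 where 1: "finite S1" "S1 \<subseteq> M" "\<psi>1 = (\<lambda>f. \<Sum>x\<in>S1. a1 x * delta M d p x f)"
    using assms(1) unfolding delta_span_def by blast
  obtain S2 a2 where 2: "finite S2" "S2 \<subseteq> M" "\<psi>2 = (\<lambda>f. \<Sum>x\<in>S2. a2 x * delta M d p x f)"
    using assms(2) unfolding delta_span_def by blast
  let ?a = "\<lambda>x. (if x \<in> S1 then a1 x else 0) + (if x \<in> S2 then a2 x else 0)"
  have e1: "(\<Sum>x\<in>S1 \<union> S2. (if x \<in> S1 then a1 x else 0) * delta M d p x f) = (\<Sum>x\<in>S1. a1 x * delta M d p x f)" for f
    by (rule sum.mono_neutral_cong_right) (use 1(1) 2(1) in auto)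
  have e2: "(\<Sum>x\<in>S1 \<union> S2. (if x \<in> S2 then a2 x else 0) * delta M d p x f) = (\<Sum>x\<in>S2. a2 x * delta M d p x f)" for f
    by (rule sum.mono_neutral_cong_right) (use 1(1) 2(1) in auto)
  have "(\<lambda>f. \<psi>1 f + \<psi>2 f) = (\<lambda>f. \<Sum>x\<in>S1 \<union> S2. ?a x * delta M d p x f)"
  proof
    fix f
    have "(\<Sum>x\<in>S1 \<union> S2. ?a x * delta M d p x f) = (\<Sum>x\<in>S1 \<union> S2. (if x \<in> S1 then a1 x else 0) * delta M d p x f)
       + (\<Sum>x\<in>S1 \<union> S2. (if x \<in> S2 then a2 x else 0) * delta M d p x f)"
      unfolding distrib_right sum.distrib by (rule refl)
    then show "\<psi>1 f + \<psi>2 f = (\<Sum>x\<in>S1 \<union> S2. ?a x * delta M d p x f)"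
      by (simp only: e1 e2 1(3) 2(3))
  qed
  then show ?thesis unfolding delta_span_def using 1(1,2) 2(1,2)
    by (intro CollectI exI[of _ "S1 \<union> S2"] exI[of _ ?a] conjI) auto
qed

lemma span_scale_cl: assumes "\<psi> \<in> delta_span M d p"
  shows "(\<lambda>f. c * \<psi> f) \<in> delta_span M d p"
proof -
  obtain S a where 1: "finite S" "S \<subseteq> M" "\<psi> = (\<lambda>f. \<Sum>x\<in>S. a x * delta M d p x f)"
    using assms(1) unfolding delta_span_def by blast
  have "(\<lambda>f. c * \<psi> f) = (\<lambda>f. \<Sum>x\<in>S. (c * a x) * delta M d p x f)"
    unfolding 1(3) sum_distrib_left mult.assoc by (rule refl)
  then show ?thesis unfolding delta_span_def using 1(1,2)
    by (intro CollectI exI[of _ S] exI[of _ "\<lambda>x. c * a x"] conjI) auto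
qed

lemma F_add_cl: assumes "\<phi>1 \<in> F" "\<phi>2 \<in> F" shows "(\<lambda>f. \<phi>1 f + \<phi>2 f) \<in> F"
proof -
  have A: "\<forall>e>0. \<exists>\<psi>\<in>delta_span M d p. \<forall>f\<in>L. \<bar>(\<phi>1 f + \<phi>2 f) - \<psi> f\<bar> \<le> e * nrm f"
  proof (intro allI impI)
    fix e :: real assume e: "e > 0"
    obtain \<psi>1 where 1: "\<psi>1 \<in> delta_span M d p" "\<forall>f\<in>L. \<bar>\<phi>1 f - \<psi>1 f\<bar> \<le> (e/2) * nrm f"
      using F_approx[OF assms(1), of "e/2"] e by auto
    obtain \<psi>2 where 2: "\<psi>2 \<in> delta_span M d p" "\<forall>f\<in>L. \<bar>\<phi>2 f - \<psi>2 f\<bar> \<le> (e/2) * nrm f"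
      using F_approx[OF assms(2), of "e/2"] e by auto
    have *: "\<forall>f\<in>L. \<bar>(\<phi>1 f + \<phi>2 f) - (\<psi>1 f + \<psi>2 f)\<bar> \<le> e * nrm f"
    proof
      fix f assume f: "f \<in> L"
      have a: "\<bar>\<phi>1 f - \<psi>1 f\<bar> \<le> (e/2) * nrm f" using 1 f by blast
      have b: "\<bar>\<phi>2 f - \<psi>2 f\<bar> \<le> (e/2) * nrm f" using 2 f by blast
      have c: "(e/2) * nrm f + (e/2) * nrm f = e * nrm f" by (simp add: field_simps)
      have "\<bar>(\<phi>1 f + \<phi>2 f) - (\<psi>1 f + \<psi>2 f)\<bar> \<le> \<bar>\<phi>1 f - \<psi>1 f\<bar> + \<bar>\<phi>2 f - \<psi>2 f\<bar>"
        using abs_triangle_ineq[of "\<phi>1 f - \<psi>1 f" "\<phi>2 f - \<psi>2 f"] by (simp add: algebra_simps)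
      then show "\<bar>(\<phi>1 f + \<phi>2 f) - (\<psi>1 f + \<psi>2 f)\<bar> \<le> e * nrm f" using a b c by linarith
    qed
    show "\<exists>\<psi>\<in>delta_span M d p. \<forall>f\<in>L. \<bar>(\<phi>1 f + \<phi>2 f) - \<psi> f\<bar> \<le> e * nrm f"
    proof (rule bexI[of _ "\<lambda>f. \<psi>1 f + \<psi>2 f"])
      show "\<forall>f\<in>L. \<bar>\<phi>1 f + \<phi>2 f - (\<lambda>f. \<psi>1 f + \<psi>2 f) f\<bar> \<le> e * nrm f" using * by simp
    qed (rule span_add_cl[OF 1(1) 2(1)])
  qed
  moreover have B: "\<forall>g. g \<notin> L \<longrightarrow> \<phi>1 g + \<phi>2 g = 0" using F_out[OF assms(1)] F_out[OF assms(2)] by simp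
  show ?thesis unfolding FreeSp_def using conjI[OF B A] by (simp only: mem_Collect_eq)
qed

lemma F_scale_cl: assumes "\<phi> \<in> F" shows "(\<lambda>f. c * \<phi> f) \<in> F"
proof -
  have A: "\<forall>e>0. \<exists>\<psi>\<in>delta_span M d p. \<forall>f\<in>L. \<bar>c * \<phi> f - \<psi> f\<bar> \<le> e * nrm f"
  proof (intro allI impI)
    fix e :: real assume e: "e > 0"
    have e': "e / (\<bar>c\<bar> + 1) > 0" using e by simp
    obtain \<psi> where 1: "\<psi> \<in> delta_span M d p" "\<forall>f\<in>L. \<bar>\<phi> f - \<psi> f\<bar> \<le> (e / (\<bar>c\<bar> + 1)) * nrm f"
      using F_approx[OF assms(1) e'] by auto
    have *: "\<forall>f\<in>L. \<bar>c * \<phi> f - c * \<psi> f\<bar> \<le> e * nrm f"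
    proof
      fix f assume f: "f \<in> L"
      have a: "\<bar>\<phi> f - \<psi> f\<bar> \<le> (e / (\<bar>c\<bar> + 1)) * nrm f" using 1 f by blast
      have "\<bar>c * \<phi> f - c * \<psi> f\<bar> = \<bar>c\<bar> * \<bar>\<phi> f - \<psi> f\<bar>" by (simp add: right_diff_distrib[symmetric] abs_mult)
      also have "\<dots> \<le> \<bar>c\<bar> * ((e / (\<bar>c\<bar> + 1)) * nrm f)" by (rule mult_left_mono[OF a]) simp
      also have "\<dots> = (\<bar>c\<bar> / (\<bar>c\<bar> + 1)) * (e * nrm f)" by simp
      also have "\<dots> \<le> 1 * (e * nrm f)"
        by (rule mult_right_mono) (use e nrm_nonneg[OF f] in auto)
      finally show "\<bar>c * \<phi> f - c * \<psi> f\<bar> \<le> e * nrm f" by simp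
    qed
    show "\<exists>\<psi>\<in>delta_span M d p. \<forall>f\<in>L. \<bar>c * \<phi> f - \<psi> f\<bar> \<le> e * nrm f"
    proof (rule bexI[of _ "\<lambda>f. c * \<psi> f"])
      show "\<forall>f\<in>L. \<bar>c * \<phi> f - (\<lambda>f. c * \<psi> f) f\<bar> \<le> e * nrm f" using * by simp
    qed (rule span_scale_cl[OF 1(1)])
  qed
  moreover have B: "\<forall>g. g \<notin> L \<longrightarrow> c * \<phi> g = 0" using F_out[OF assms(1)] by simp
  show ?thesis unfolding FreeSp_def using conjI[OF B A] by (simp only: mem_Collect_eq)
qed

lemma F_diff_cl: assumes "\<phi>1 \<in> F" "\<phi>2 \<in> F" shows "(\<lambda>f. \<phi>1 f - \<phi>2 f) \<in> F"
  using F_add_cl[OF assms(1) F_scale_cl[OF assms(2), of "-1"]] by simp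

lemma F_neg_cl: assumes "\<phi> \<in> F" shows "(\<lambda>f. - \<phi> f) \<in> F"
  using F_scale_cl[OF assms, of "-1"] by simp

lemma F_zero: "(\<lambda>_. 0) \<in> F"
proof -
  have "(\<lambda>_. 0) \<in> delta_span M d p" unfolding delta_span_def
    by (rule CollectI, rule exI[of _ "{}"]) auto
  then show ?thesis unfolding FreeSp_def using nrm_nonneg
    by (intro CollectI conjI allI impI; simp) (intro bexI[of _ "\<lambda>_. 0"], auto)
qed

lemma N_add: assumes "\<phi>1 \<in> F" "\<phi>2 \<in> F" shows "N (\<lambda>f. \<phi>1 f + \<phi>2 f) \<le> N \<phi>1 + N \<phi>2"
  apply (rule N_least)
  using N_nonneg assms apply (simp add: add_nonneg_nonneg)
  subgoal for f
    using N_upper[OF assms(1), of f] N_upper[OF assms(2), of f] abs_triangle_ineq[of "\<phi>1 f" "\<phi>2 f"] by linarith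
  done

lemma N_scale: assumes "\<phi> \<in> F" shows "N (\<lambda>f. c * \<phi> f) \<le> \<bar>c\<bar> * N \<phi>"
  apply (rule N_least)
  using N_nonneg assms apply simp
  using N_upper[OF assms] by (simp add: abs_mult mult_left_mono)

lemma N_neg: assumes "\<phi> \<in> F" shows "N (\<lambda>f. - \<phi> f) = N \<phi>"
proof -
  have "N (\<lambda>f. - \<phi> f) \<le> N \<phi>" using N_scale[OF assms, of "-1"] by simp
  moreover have "N (\<lambda>f. - (- \<phi> f)) \<le> N (\<lambda>f. - \<phi> f)" using N_scale[OF F_neg_cl[OF assms], of "-1"] by simp
  ultimately show ?thesis by simp
qed

lemma N_zero: "N (\<lambda>_. 0) = 0"
  using N_least[of 0 "\<lambda>_. 0"] N_nonneg[OF F_zero] by simp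

lemma N_sym: assumes "\<phi> \<in> F" "\<psi> \<in> F" shows "N (\<lambda>f. \<phi> f - \<psi> f) = N (\<lambda>f. \<psi> f - \<phi> f)"
  using N_neg[OF F_diff_cl[OF assms]] by simp

lemma N_tri: assumes "a \<in> F" "b \<in> F" "c \<in> F"
  shows "N (\<lambda>f. a f - c f) \<le> N (\<lambda>f. a f - b f) + N (\<lambda>f. b f - c f)"
  using N_add[OF F_diff_cl[OF assms(1,2)] F_diff_cl[OF assms(2,3)]] by simp

lemma N_by_bound: assumes "0 \<le> K" "\<And>f. f \<in> L \<Longrightarrow> \<bar>ch f\<bar> \<le> K * nrm f" shows "N ch \<le> K"
proof (rule N_least[OF assms(1)])
  fix f assume f: "f \<in> L" "nrm f \<le> 1"
  have "K * nrm f \<le> K" using f assms(1) by (simp add: mult_left_le)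
  then show "\<bar>ch f\<bar> \<le> K" using assms(2)[OF f(1)] by linarith
qed

lemma span_F: assumes "\<psi> \<in> delta_span M d p" shows "\<psi> \<in> F"
proof -
  have "\<forall>g. g \<notin> L \<longrightarrow> \<psi> g = 0" using assms unfolding delta_span_def by (auto simp: delta_def)
  moreover have "\<forall>e>0. \<exists>\<psi>'\<in>delta_span M d p. \<forall>f\<in>L. \<bar>\<psi> f - \<psi>' f\<bar> \<le> e * nrm f"
    using assms nrm_nonneg by (intro allI impI bexI[of _ \<psi>]) auto
  ultimately show ?thesis unfolding FreeSp_def by (simp only: mem_Collect_eq)
qed

lemma delta_F: assumes "x \<in> M" shows "delta M d p x \<in> F"
proof -
  have "delta M d p x = (\<lambda>f. \<Sum>z\<in>{x}. (\<lambda>_. 1) z * delta M d p z f)" by simp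
  then have "delta M d p x \<in> delta_span M d p" unfolding delta_span_def using assms
    by (intro CollectI exI[of _ "{x}"] exI[of _ "\<lambda>_. 1::real"] conjI) auto
  then show ?thesis by (rule span_F)
qed

lemma mol_F: assumes "x \<in> M" "y \<in> M" shows "molecule M d p x y \<in> F"
proof -
  have "molecule M d p x y = (\<lambda>f. (1 / d x y) * (delta M d p x f - delta M d p y f))"
    unfolding molecule_def by (simp add: fun_eq_iff)
  show ?thesis unfolding \<open>molecule M d p x y = _\<close>
    by (rule F_scale_cl[OF F_diff_cl[OF delta_F[OF assms(1)] delta_F[OF assms(2)]]])
qed

lemma mol_val: "f \<in> L \<Longrightarrow> molecule M d p x y f = (f x - f y) / d x y"
  by (simp add: molecule_def delta_def)

lemma mol_N: assumes "x \<in> M" "y \<in> M" "x \<noteq> y" shows "N (molecule M d p x y) \<le> 1"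
proof (rule N_least)
  fix f assume f: "f \<in> L" "nrm f \<le> 1"
  have "\<bar>molecule M d p x y f\<bar> = \<bar>f x - f y\<bar> / d x y"
    using mol_val[OF f(1)] assms mdist_pos_less by auto
  also have "\<dots> \<le> nrm f" by (rule slope_le_nrm) (use assms f in auto)
  finally show "\<bar>molecule M d p x y f\<bar> \<le> 1" using f by simp
qed simp

lemma mol_B: assumes "x \<in> M" "y \<in> M" "x \<noteq> y" shows "molecule M d p x y \<in> B"
  using mol_F mol_N assms by (simp add: free_ball_def)

lemma B_iff: "\<phi> \<in> B \<longleftrightarrow> \<phi> \<in> F \<and> N \<phi> \<le> 1"
  by (simp add: free_ball_def)

lemma SNA_sub_NA: assumes "f \<in> Lip_SNA M d p" shows "f \<in> NA_free M d p"
proof -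
  obtain x y where xy: "x \<in> M" "y \<in> M" "x \<noteq> y" "\<bar>f x - f y\<bar> = nrm f * d x y" and f: "f \<in> L"
    using assms unfolding Lip_SNA_def by blast
  have pos: "d x y > 0" using xy mdist_pos_less by auto
  have "\<bar>molecule M d p x y f\<bar> = nrm f"
    using mol_val[OF f] xy pos by simp
  then show ?thesis unfolding NA_free_def using f mol_B[OF xy(1-3)] by blast
qed

lemma two_zero: assumes "0 \<le> a" "0 \<le> b" "0 < t" "t < 1" "t * a + (1 - t) * b = (0::real)"
  shows "a = 0" "b = 0"
proof -
  have "0 \<le> t * a" "0 \<le> (1 - t) * b" using assms by simp_all
  then have "t * a = 0" "(1 - t) * b = 0" using assms(5) by linarith+
  then show "a = 0" "b = 0" using assms(3,4) by simp_all
qed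

lemma NA_sub_SNA:
  assumes KMP: "free_KMP M d p"
    and H4: "\<forall>e. fextreme_point B e \<longrightarrow> (\<exists>x\<in>M. \<exists>y\<in>M. x \<noteq> y \<and> e = molecule M d p x y)"
    and fNA: "f \<in> NA_free M d p"
  shows "f \<in> Lip_SNA M d p"
proof -
  obtain \<phi> where f: "f \<in> L" and \<phi>: "\<phi> \<in> B" "\<bar>\<phi> f\<bar> = nrm f"
    using fNA unfolding NA_free_def by blast
  obtain \<phi>' where \<phi>': "\<phi>' \<in> B" "\<phi>' f = nrm f"
  proof (cases "\<phi> f \<ge> 0")
    case True then show ?thesis using that \<phi> by simp
  next
    case False
    have "(\<lambda>g. - \<phi> g) \<in> B" using \<phi>(1) F_neg_cl N_neg by (simp add: B_iff)
    then show ?thesis using that[of "\<lambda>g. - \<phi> g"] \<phi> False by simp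
  qed
  define C where "C = {ch \<in> B. ch f = nrm f}"
  have CF: "C \<subseteq> F" unfolding C_def using B_iff by blast
  have Cne: "C \<noteq> {}" unfolding C_def using \<phi>' by blast
  have Cconv: "fconvex C" unfolding fconvex_def
  proof (intro ballI allI impI)
    fix c1 c2 and t :: real assume c: "c1 \<in> C" "c2 \<in> C" and t: "0 \<le> t \<and> t \<le> 1"
    have c1: "c1 \<in> F" "N c1 \<le> 1" "c1 f = nrm f" using c unfolding C_def B_iff by auto
    have c2: "c2 \<in> F" "N c2 \<le> 1" "c2 f = nrm f" using c unfolding C_def B_iff by auto
    have inF: "(\<lambda>g. t * c1 g + (1 - t) * c2 g) \<in> F"
      using F_add_cl[OF F_scale_cl[OF c1(1)] F_scale_cl[OF c2(1)]] by simp
    have "N (\<lambda>g. t * c1 g + (1 - t) * c2 g) \<le> N (\<lambda>g. t * c1 g) + N (\<lambda>g. (1 - t) * c2 g)"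
      using N_add[OF F_scale_cl[OF c1(1)] F_scale_cl[OF c2(1)]] by simp
    also have "\<dots> \<le> \<bar>t\<bar> * N c1 + \<bar>1 - t\<bar> * N c2"
      using N_scale[OF c1(1), of t] N_scale[OF c2(1), of "1 - t"] by simp
    also have "\<dots> = t * N c1 + (1 - t) * N c2" using t by simp
    also have "\<dots> \<le> t * 1 + (1 - t) * 1"
      using t c1(2) c2(2) by (intro add_mono mult_left_mono) auto
    finally have "N (\<lambda>g. t * c1 g + (1 - t) * c2 g) \<le> 1" by simp
    moreover have "t * c1 f + (1 - t) * c2 f = nrm f" using c1 c2 by (simp add: algebra_simps)
    ultimately show "(\<lambda>g. t * c1 g + (1 - t) * c2 g) \<in> C" unfolding C_def B_iff using inF by simp
  qed
  have Cbdd: "\<exists>R. \<forall>ch\<in>C. N ch \<le> R" unfolding C_def B_iff by auto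
  have Ccl: "\<forall>\<phi>0\<in>F. (\<forall>\<epsilon>>0. \<exists>\<psi>\<in>C. N (\<lambda>g. \<phi>0 g - \<psi> g) < \<epsilon>) \<longrightarrow> \<phi>0 \<in> C"
  proof (intro ballI impI)
    fix \<phi>0 assume \<phi>0: "\<phi>0 \<in> F" and ap: "\<forall>\<epsilon>>0. \<exists>\<psi>\<in>C. N (\<lambda>g. \<phi>0 g - \<psi> g) < \<epsilon>"
    have "N \<phi>0 \<le> 1 + \<epsilon> * 1" if eps: "\<epsilon> > 0" for \<epsilon>
    proof -
      obtain \<psi> where \<psi>: "\<psi> \<in> C" "N (\<lambda>g. \<phi>0 g - \<psi> g) < \<epsilon>" using ap eps by blast
      have \<psi>F: "\<psi> \<in> F" "N \<psi> \<le> 1" using \<psi>(1) unfolding C_def B_iff by auto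
      have "N \<phi>0 \<le> N (\<lambda>g. \<phi>0 g - \<psi> g) + N \<psi>"
        using N_add[OF F_diff_cl[OF \<phi>0 \<psi>F(1)] \<psi>F(1)] by simp
      then show ?thesis using \<psi>(2) \<psi>F(2) by linarith
    qed
    then have N1: "N \<phi>0 \<le> 1" by (rule le_by_eps[where K=1]) simp_all
    have "\<phi>0 f - nrm f = 0"
    proof (rule zero_by_eps[of _ "nrm f"])
      fix \<epsilon> :: real assume "\<epsilon> > 0"
      obtain \<psi> where \<psi>: "\<psi> \<in> C" "N (\<lambda>g. \<phi>0 g - \<psi> g) < \<epsilon>" using ap \<open>\<epsilon> > 0\<close> by blast
      have \<psi>F: "\<psi> \<in> F" "\<psi> f = nrm f" using \<psi>(1) unfolding C_def B_iff by auto
      have "\<bar>\<phi>0 f - \<psi> f\<bar> \<le> N (\<lambda>g. \<phi>0 g - \<psi> g) * nrm f"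
        using N_bound[OF F_diff_cl[OF \<phi>0 \<psi>F(1)] f] by simp
      also have "\<dots> \<le> \<epsilon> * nrm f" using \<psi>(2) nrm_nonneg[OF f] by (simp add: mult_right_mono)
      finally show "\<bar>\<phi>0 f - nrm f\<bar> \<le> \<epsilon> * nrm f" using \<psi>F(2) by simp
    qed (use nrm_nonneg[OF f] in simp)
    then show "\<phi>0 \<in> C" unfolding C_def B_iff using \<phi>0 N1 by simp
  qed
  obtain e where e: "fextreme_point C e"
    using KMP[unfolded free_KMP_def, THEN spec[of _ C], THEN mp,
          OF conjI[OF CF conjI[OF Cne conjI[OF Cconv conjI[OF Cbdd Ccl]]]]] by blast
  have eC: "e \<in> C" using e unfolding fextreme_point_def by blast
  have "fextreme_point B e"
    unfolding fextreme_point_def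
  proof (intro conjI ballI allI impI)
    show "e \<in> B" using eC unfolding C_def by simp
    fix c1 c2 and t :: real
    assume c: "c1 \<in> B" "c2 \<in> B" and t: "0 < t \<and> t < 1 \<and> e = (\<lambda>f. t * c1 f + (1 - t) * c2 f)"
    have ef: "e f = nrm f" using eC unfolding C_def by simp
    have le1: "c1 f \<le> nrm f"
    proof -
      have "\<bar>c1 f\<bar> \<le> N c1 * nrm f" using N_bound c f by (simp add: B_iff)
      also have "\<dots> \<le> 1 * nrm f" using c nrm_nonneg[OF f] by (intro mult_right_mono) (auto simp: B_iff)
      finally show ?thesis by simp
    qed
    have le2: "c2 f \<le> nrm f"
    proof -
      have "\<bar>c2 f\<bar> \<le> N c2 * nrm f" using N_bound c f by (simp add: B_iff)
      also have "\<dots> \<le> 1 * nrm f" using c nrm_nonneg[OF f] by (intro mult_right_mono) (auto simp: B_iff)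
      finally show ?thesis by simp
    qed
    have "t * (nrm f - c1 f) + (1 - t) * (nrm f - c2 f) = 0"
      using ef t by (simp add: algebra_simps)
    then have "nrm f - c1 f = 0" "nrm f - c2 f = 0"
      using two_zero[of "nrm f - c1 f" "nrm f - c2 f" t] le1 le2 t by auto
    then have "c1 \<in> C" "c2 \<in> C" unfolding C_def using c by auto
    moreover have "\<forall>\<phi>\<in>C. \<forall>\<psi>\<in>C. \<forall>t. 0 < t \<and> t < 1 \<and> e = (\<lambda>f. t * \<phi> f + (1 - t) * \<psi> f) \<longrightarrow> \<phi> = \<psi>"
      using e unfolding fextreme_point_def by (rule conjunct2)
    ultimately show "c1 = c2" using t by blast
  qed
  then obtain x y where xy: "x \<in> M" "y \<in> M" "x \<noteq> y" "e = molecule M d p x y" using H4 by blast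
  have pos: "d x y > 0" using xy mdist_pos_less by auto
  have "(f x - f y) / d x y = nrm f" using eC xy(4) mol_val[OF f] unfolding C_def by simp
  then have "f x - f y = nrm f * d x y" using pos by (simp add: divide_eq_eq)
  then have "\<bar>f x - f y\<bar> = nrm f * d x y" using nrm_nonneg[OF f] pos by simp
  then show ?thesis unfolding Lip_SNA_def using f xy by blast
qed

lemma pow_small: "0 < (e::real) \<Longrightarrow> \<exists>n. (1/2::real)^n < e"
  using real_arch_pow_inv[of e "1/2"] by simp

lemma le_by_pow: assumes "\<And>k. X \<le> Y + (1/2::real)^k * K" shows "X \<le> Y"
proof (cases "K \<le> 0")
  case True then show ?thesis using assms[of 0] by simp
next
  case False
  show ?thesis
  proof (rule ccontr)
    assume "\<not> X \<le> Y"
    then have "(X - Y) / K > 0" using False by simp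
    then obtain k where k: "(1/2::real)^k < (X - Y) / K" using pow_small by blast
    then have "(1/2::real)^k * K < X - Y" using False by (simp add: pos_less_divide_eq)
    then show False using assms[of k] by simp
  qed
qed

lemma B_val_le: assumes "b \<in> B" "f \<in> L" shows "b f \<le> nrm f"
proof -
  have "\<bar>b f\<bar> \<le> N b * nrm f" using N_bound assms by (simp add: B_iff)
  also have "\<dots> \<le> 1 * nrm f" using assms nrm_nonneg[OF assms(2)] by (intro mult_right_mono) (auto simp: B_iff)
  finally show ?thesis by simp
qed

lemma ekeland:
  assumes f: "f \<in> L" and eta: "\<eta> > 0"
  shows "\<exists>\<phi>0\<in>B. \<forall>\<phi>\<in>B. \<phi> f - \<phi>0 f \<le> \<eta> * N (\<lambda>g. \<phi> g - \<phi>0 g)"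
proof -
  define R where "R a b \<longleftrightarrow> \<eta> * N (\<lambda>g. b g - a g) \<le> b f - a f" for a b
  define S where "S a = {b \<in> B. R a b}" for a
  define sup where "sup a = Sup ((\<lambda>b. b f) ` S a)" for a
  have Rrefl: "R a a" if "a \<in> F" for a
  proof -
    have "(\<lambda>g. a g - a g) = (\<lambda>_. 0)" by simp
    then show ?thesis unfolding R_def using N_zero by simp
  qed
  have Rtrans: "R a c" if "a \<in> F" "b \<in> F" "c \<in> F" "R a b" "R b c" for a b c
  proof -
    have "N (\<lambda>g. c g - a g) \<le> N (\<lambda>g. c g - b g) + N (\<lambda>g. b g - a g)" using N_tri that(1-3) by blast
    then have "\<eta> * N (\<lambda>g. c g - a g) \<le> \<eta> * N (\<lambda>g. c g - b g) + \<eta> * N (\<lambda>g. b g - a g)"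
      using eta by (simp add: distrib_left[symmetric])
    then show ?thesis using that(4,5) unfolding R_def by linarith
  qed
  have Sbdd: "bdd_above ((\<lambda>b. b f) ` S a)" for a
    using B_val_le[OF _ f] unfolding S_def by (intro bdd_aboveI[where M="nrm f"]) auto
  have Sne: "S a \<noteq> {}" if "a \<in> B" for a
    using that Rrefl unfolding S_def by (auto simp: B_iff)
  have nxt_ex: "\<exists>b. b \<in> S a \<and> sup a - (1/2)^n \<le> b f" if aB: "a \<in> B" for a n
  proof -
    have lt: "sup a - (1/2)^n < Sup ((\<lambda>b. b f) ` S a)" unfolding sup_def by simp
    have ne: "(\<lambda>b. b f) ` S a \<noteq> {}" using Sne[OF aB] by blast
    obtain y where "y \<in> (\<lambda>b. b f) ` S a" "sup a - (1/2)^n < y"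
      by (rule less_cSupE[OF lt ne])
    then show ?thesis by force
  qed
  define nxt where "nxt n a = (SOME b. b \<in> S a \<and> sup a - (1/2::real)^n \<le> b f)" for n a
  have nxt: "nxt n a \<in> S a" "sup a - (1/2)^n \<le> nxt n a f" if "a \<in> B" for a n
    using someI_ex[OF nxt_ex[OF that, of n]] unfolding nxt_def by blast+
  define s where "s = rec_nat (\<lambda>_. 0) nxt"
  have s0: "s 0 = (\<lambda>_. 0)" and sS: "s (Suc n) = nxt n (s n)" for n
    unfolding s_def by simp_all
  have sB: "s n \<in> B" for n
  proof (induction n)
    case 0 then show ?case using s0 F_zero N_zero by (simp add: B_iff)
  next
    case (Suc n) then show ?case using nxt(1)[OF Suc] sS unfolding S_def by simp
  qed
  have sF: "s n \<in> F" for n using sB by (simp add: B_iff)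
  have sR: "R (s n) (s m)" if "n \<le> m" for n m
    using that
  proof (induction m rule: dec_induct)
    case base then show ?case using Rrefl sF by blast
  next
    case (step m)
    have "R (s m) (s (Suc m))" using nxt(1)[OF sB[of m]] sS unfolding S_def by simp
    then show ?case using Rtrans[OF sF sF sF step.IH] by blast
  qed
  have small: "\<eta> * N (\<lambda>g. b g - s (Suc n) g) \<le> (1/2)^n" if b: "b \<in> S (s (Suc n))" for b n
  proof -
    have bB: "b \<in> B" and Rb: "R (s (Suc n)) b" using b unfolding S_def by auto
    have "R (s n) b" using Rtrans[OF sF sF _ sR[of n "Suc n"] Rb] bB by (simp add: B_iff)
    then have "b \<in> S (s n)" using bB unfolding S_def by simp
    then have "b f \<le> sup (s n)" unfolding sup_def using Sbdd by (intro cSup_upper) auto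
    moreover have "sup (s n) - (1/2)^n \<le> s (Suc n) f" using nxt(2)[OF sB[of n]] sS by simp
    ultimately show ?thesis using Rb unfolding R_def by linarith
  qed
  have sdist: "N (\<lambda>g. s m g - s (Suc n) g) \<le> (1/2)^n / \<eta>" if "Suc n \<le> m" for m n
  proof -
    have "s m \<in> S (s (Suc n))" using sR[OF that] sB unfolding S_def by simp
    then have "\<eta> * N (\<lambda>g. s m g - s (Suc n) g) \<le> (1/2)^n" by (rule small)
    then show ?thesis using eta by (simp add: le_divide_eq mult.commute)
  qed
  have sval: "\<bar>s m g - s (Suc n) g\<bar> \<le> (1/2)^n / \<eta> * nrm g" if "Suc n \<le> m" "g \<in> L" for m n g
  proof -
    have "\<bar>s m g - s (Suc n) g\<bar> \<le> N (\<lambda>g. s m g - s (Suc n) g) * nrm g"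
      using N_bound[OF F_diff_cl[OF sF sF] that(2)] by simp
    also have "\<dots> \<le> (1/2)^n / \<eta> * nrm g"
      using sdist[OF that(1)] nrm_nonneg[OF that(2)] by (rule mult_right_mono)
    finally show ?thesis .
  qed
  have conv: "convergent (\<lambda>m. s m g)" if g: "g \<in> L" for g
  proof -
    have "Cauchy (\<lambda>m. s m g)"
    proof (rule CauchyI)
      fix e :: real assume e: "0 < e"
      obtain n where n: "(1/2::real)^n < e / (2 * (nrm g + 1) / \<eta>)"
        using pow_small[of "e / (2 * (nrm g + 1) / \<eta>)"] e eta nrm_nonneg[OF g]
        by (auto simp: add_nonneg_pos)
      have K: "2 * ((1/2)^n / \<eta> * nrm g) < e"
      proof -
        have "2 * ((1/2)^n / \<eta> * nrm g) \<le> (1/2)^n * (2 * (nrm g + 1) / \<eta>)"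
          using eta nrm_nonneg[OF g] by (simp add: field_simps)
        also have "\<dots> < e" using n eta nrm_nonneg[OF g]
          by (simp add: pos_less_divide_eq pos_divide_less_eq add_nonneg_pos)
        finally show ?thesis .
      qed
      show "\<exists>M. \<forall>m\<ge>M. \<forall>k\<ge>M. norm (s m g - s k g) < e"
      proof (intro exI[of _ "Suc n"] allI impI)
        fix m k assume "Suc n \<le> m" "Suc n \<le> k"
        then have "\<bar>s m g - s (Suc n) g\<bar> \<le> (1/2)^n / \<eta> * nrm g" "\<bar>s k g - s (Suc n) g\<bar> \<le> (1/2)^n / \<eta> * nrm g"
          using sval g by blast+
        then show "norm (s m g - s k g) < e" using K by simp
      qed
    qed
    then show ?thesis by (simp add: Cauchy_convergent_iff)
  qed
  define \<phi>s where "\<phi>s g = (if g \<in> L then lim (\<lambda>m. s m g) else 0)" for g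
  have lim: "(\<lambda>m. s m g) \<longlonglongrightarrow> \<phi>s g" if "g \<in> L" for g
    using conv[OF that] that unfolding \<phi>s_def by (simp add: convergent_LIMSEQ_iff)
  have lim_bound: "\<bar>\<phi>s g - s (Suc n) g\<bar> \<le> (1/2)^n / \<eta> * nrm g" if g: "g \<in> L" for g n
  proof (rule LIMSEQ_le_const2)
    show "(\<lambda>m. \<bar>s m g - s (Suc n) g\<bar>) \<longlonglongrightarrow> \<bar>\<phi>s g - s (Suc n) g\<bar>"
      by (intro tendsto_intros lim[OF g])
    show "\<exists>N. \<forall>m\<ge>N. \<bar>s m g - s (Suc n) g\<bar> \<le> (1/2)^n / \<eta> * nrm g"
      using sval g by blast
  qed
  have \<phi>sF: "\<phi>s \<in> F"
  proof -
    have A: "\<forall>e>0. \<exists>\<psi>\<in>delta_span M d p. \<forall>g\<in>L. \<bar>\<phi>s g - \<psi> g\<bar> \<le> e * nrm g"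
    proof (intro allI impI)
      fix e :: real assume e: "e > 0"
      obtain n where n: "(1/2::real)^n < e / 2 * \<eta>" using pow_small[of "e / 2 * \<eta>"] e eta by auto
      then have n': "(1/2::real)^n / \<eta> \<le> e / 2" using eta by (simp add: divide_le_eq)
      obtain \<psi> where \<psi>: "\<psi> \<in> delta_span M d p" "\<forall>g\<in>L. \<bar>s (Suc n) g - \<psi> g\<bar> \<le> (e/2) * nrm g"
        using F_approx[OF sF[of "Suc n"], of "e/2"] e by auto
      have "\<forall>g\<in>L. \<bar>\<phi>s g - \<psi> g\<bar> \<le> e * nrm g"
      proof
        fix g assume g: "g \<in> L"
        have a: "\<bar>\<phi>s g - s (Suc n) g\<bar> \<le> (e/2) * nrm g"
          using lim_bound[OF g, of n] mult_right_mono[OF n' nrm_nonneg[OF g]] by linarith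
        have b: "\<bar>s (Suc n) g - \<psi> g\<bar> \<le> (e/2) * nrm g" using \<psi>(2) g by blast
        have "\<bar>\<phi>s g - \<psi> g\<bar> \<le> \<bar>\<phi>s g - s (Suc n) g\<bar> + \<bar>s (Suc n) g - \<psi> g\<bar>" using abs_triangle_ineq[of "\<phi>s g - s (Suc n) g" "s (Suc n) g - \<psi> g"] by simp
        also have "\<dots> \<le> (e/2) * nrm g + (e/2) * nrm g" using a b by (rule add_mono)
        also have "\<dots> = e * nrm g" by (simp add: field_simps)
        finally show "\<bar>\<phi>s g - \<psi> g\<bar> \<le> e * nrm g" .
      qed
      then show "\<exists>\<psi>\<in>delta_span M d p. \<forall>g\<in>L. \<bar>\<phi>s g - \<psi> g\<bar> \<le> e * nrm g" using \<psi>(1) by blast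
    qed
    have B0: "\<forall>g. g \<notin> L \<longrightarrow> \<phi>s g = 0" unfolding \<phi>s_def by simp
    show ?thesis unfolding FreeSp_def using conjI[OF B0 A] by (simp only: mem_Collect_eq)
  qed
  have Nlim: "N (\<lambda>g. \<phi>s g - s (Suc n) g) \<le> (1/2)^n / \<eta>" for n
    by (rule N_by_bound) (use lim_bound eta in auto)
  have \<phi>sB: "\<phi>s \<in> B"
  proof -
    have "N \<phi>s \<le> 1 + (1/2)^n * (1 / \<eta>)" for n
    proof -
      have "N \<phi>s \<le> N (\<lambda>g. \<phi>s g - s (Suc n) g) + N (s (Suc n))"
        using N_add[OF F_diff_cl[OF \<phi>sF sF[of "Suc n"]] sF[of "Suc n"]] by simp
      then show ?thesis using Nlim[of n] sB[of "Suc n"] by (simp add: B_iff)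
    qed
    then have "N \<phi>s \<le> 1" by (rule le_by_pow)
    then show ?thesis using \<phi>sF by (simp add: B_iff)
  qed
  have Rs: "R (s n) \<phi>s" for n
  proof -
    have "\<eta> * N (\<lambda>g. \<phi>s g - s n g) \<le> \<phi>s f - s n f + (1/2)^k * (1 + nrm f / \<eta>)" for k
    proof -
      let ?m = "Suc (k + n)"
      have "N (\<lambda>g. \<phi>s g - s n g) \<le> N (\<lambda>g. \<phi>s g - s ?m g) + N (\<lambda>g. s ?m g - s n g)"
        using N_tri[OF \<phi>sF sF sF] by blast
      also have "N (\<lambda>g. \<phi>s g - s ?m g) \<le> (1/2)^(k+n) / \<eta>" using Nlim .
      finally have "\<eta> * N (\<lambda>g. \<phi>s g - s n g) \<le> \<eta> * ((1/2)^(k+n) / \<eta> + N (\<lambda>g. s ?m g - s n g))"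
        using eta by (simp add: mult_left_mono)
      then have 1: "\<eta> * N (\<lambda>g. \<phi>s g - s n g) \<le> (1/2)^(k+n) + \<eta> * N (\<lambda>g. s ?m g - s n g)"
        using eta by (simp add: distrib_left)
      have 2: "\<eta> * N (\<lambda>g. s ?m g - s n g) \<le> s ?m f - s n f" using sR[of n ?m] unfolding R_def by simp
      have 3: "s ?m f \<le> \<phi>s f + (1/2)^(k+n) * (nrm f / \<eta>)" using lim_bound[OF f, of "k+n"] by simp
      have pk: "(1/2::real)^(k+n) \<le> (1/2)^k" by (rule power_decreasing) auto
      have 4: "(1/2::real)^(k+n) * (1 + nrm f / \<eta>) \<le> (1/2)^k * (1 + nrm f / \<eta>)"
        using pk eta nrm_nonneg[OF f] by (intro mult_right_mono) auto
      show ?thesis using 1 2 3 4 by (simp add: distrib_left)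
    qed
    then show ?thesis unfolding R_def by (rule le_by_pow)
  qed
  show ?thesis
  proof (intro bexI[of _ \<phi>s] ballI)
    show "\<phi>s \<in> B" by (rule \<phi>sB)
    fix \<phi> assume \<phi>B: "\<phi> \<in> B"
    have \<phi>F: "\<phi> \<in> F" using \<phi>B by (simp add: B_iff)
    have Nnn: "0 \<le> N (\<lambda>g. \<phi> g - \<phi>s g)" using N_nonneg[OF F_diff_cl[OF \<phi>F \<phi>sF]] .
    show "\<phi> f - \<phi>s f \<le> \<eta> * N (\<lambda>g. \<phi> g - \<phi>s g)"
    proof (rule ccontr)
      assume neg: "\<not> \<phi> f - \<phi>s f \<le> \<eta> * N (\<lambda>g. \<phi> g - \<phi>s g)"
      then have "R \<phi>s \<phi>" unfolding R_def by simp
      then have Rn: "R (s n) \<phi>" for n using Rtrans[OF sF \<phi>sF \<phi>F Rs] by blast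
      have "N (\<lambda>g. \<phi> g - \<phi>s g) \<le> 0 + (1/2)^k * (2 / \<eta>)" for k
      proof -
        have "\<phi> \<in> S (s (Suc k))" using Rn \<phi>B unfolding S_def by simp
        then have "\<eta> * N (\<lambda>g. \<phi> g - s (Suc k) g) \<le> (1/2)^k" by (rule small)
        then have a: "N (\<lambda>g. \<phi> g - s (Suc k) g) \<le> (1/2)^k / \<eta>" using eta by (simp add: le_divide_eq mult.commute)
        have b: "N (\<lambda>g. s (Suc k) g - \<phi>s g) \<le> (1/2)^k / \<eta>"
          using Nlim[of k] N_sym[OF \<phi>sF sF[of "Suc k"]] by simp
        have "N (\<lambda>g. \<phi> g - \<phi>s g) \<le> N (\<lambda>g. \<phi> g - s (Suc k) g) + N (\<lambda>g. s (Suc k) g - \<phi>s g)"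
          using N_tri[OF \<phi>F sF \<phi>sF] by blast
        also have "\<dots> \<le> (1/2)^k / \<eta> + (1/2)^k / \<eta>" using a b by (rule add_mono)
        finally show ?thesis by (simp add: mult.commute)
      qed
      then have "N (\<lambda>g. \<phi> g - \<phi>s g) \<le> 0" by (rule le_by_pow)
      then have "N (\<lambda>g. \<phi> g - \<phi>s g) = 0" using Nnn by simp
      then have "\<bar>\<phi> f - \<phi>s f\<bar> \<le> 0"
        using N_bound[OF F_diff_cl[OF \<phi>F \<phi>sF] f] by simp
      then show False using neg Nnn eta by simp
    qed
  qed
qed

lemma N_scale_eq: assumes "\<phi> \<in> F" shows "N (\<lambda>f. c * \<phi> f) = \<bar>c\<bar> * N \<phi>"
proof (cases "c = 0")
  case True then show ?thesis using N_zero by simp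
next
  case False
  have "N \<phi> = N (\<lambda>f. (1 / c) * (c * \<phi> f))" using False by simp
  also have "\<dots> \<le> \<bar>1 / c\<bar> * N (\<lambda>f. c * \<phi> f)" by (rule N_scale[OF F_scale_cl[OF assms]])
  finally have "\<bar>c\<bar> * N \<phi> \<le> N (\<lambda>f. c * \<phi> f)" using False by (simp add: field_simps)
  then show ?thesis using N_scale[OF assms, of c] by simp
qed

lemma h_span:
  fixes h :: "'a functional \<Rightarrow> real"
  assumes hadd: "\<forall>x\<in>F. \<forall>y\<in>F. h (\<lambda>b. x b + y b) = h x + h y"
    and hsc: "\<forall>x\<in>F. \<forall>c. h (\<lambda>b. c * x b) = c * h x"
    and S: "finite S" "S \<subseteq> M"
  shows "h (\<lambda>f. \<Sum>x\<in>S. a x * delta M d p x f) = (\<Sum>x\<in>S. a x * h (delta M d p x))"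
  using S
proof (induction S rule: finite_induct)
  case empty
  show ?case using hsc[rule_format, OF F_zero, of 0] by simp
next
  case (insert x S)
  have spS: "(\<lambda>f. \<Sum>x\<in>S. a x * delta M d p x f) \<in> F"
    using insert by (intro span_F) (auto simp: delta_span_def)
  have dx: "delta M d p x \<in> F" using insert delta_F by simp
  have "h (\<lambda>f. \<Sum>x\<in>insert x S. a x * delta M d p x f)
      = h (\<lambda>f. (\<lambda>f. a x * delta M d p x f) f + (\<lambda>f. \<Sum>x\<in>S. a x * delta M d p x f) f)"
    using insert by simp
  also have "\<dots> = h (\<lambda>f. a x * delta M d p x f) + h (\<lambda>f. \<Sum>x\<in>S. a x * delta M d p x f)"
    by (rule hadd[rule_format, OF F_scale_cl[OF dx] spS])
  also have "h (\<lambda>f. a x * delta M d p x f) = a x * h (delta M d p x)" using hsc dx by blast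
  finally show ?case using insert by simp
qed

lemma density:
  assumes KMP: "free_KMP M d p"
    and H4: "\<forall>e. fextreme_point B e \<longrightarrow> (\<exists>x\<in>M. \<exists>y\<in>M. x \<noteq> y \<and> e = molecule M d p x y)"
    and f: "f \<in> L" and eps: "\<epsilon> > 0"
  shows "\<exists>g\<in>Lip_SNA M d p. nrm (\<lambda>x. f x - g x) < \<epsilon>"
proof -
  define \<eta> where "\<eta> = \<epsilon> / 2"
  have eta: "\<eta> > 0" using eps unfolding \<eta>_def by simp
  obtain \<phi>0 where \<phi>0B: "\<phi>0 \<in> B" and ek: "\<forall>\<phi>\<in>B. \<phi> f - \<phi>0 f \<le> \<eta> * N (\<lambda>g. \<phi> g - \<phi>0 g)"
    using ekeland[OF f eta] by blast
  have \<phi>0F: "\<phi>0 \<in> F" using \<phi>0B by (simp add: B_iff)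
  define T where "T \<psi> = {t * (\<phi>0 f - \<phi> f) + \<eta> * N (\<lambda>g. \<psi> g - t * (\<phi> g - \<phi>0 g)) | t \<phi>. t \<ge> 0 \<and> \<phi> \<in> B}" for \<psi>
  define q where "q \<psi> = Inf (T \<psi>)" for \<psi>
  have Tmem: "t * (\<phi>0 f - \<phi> f) + \<eta> * N (\<lambda>g. \<psi> g - t * (\<phi> g - \<phi>0 g)) \<in> T \<psi>" if "t \<ge> 0" "\<phi> \<in> B" for t \<phi> \<psi>
    unfolding T_def using that by blast
  have Tlow: "- \<eta> * N \<psi> \<le> z" if tl: "\<psi> \<in> F" "z \<in> T \<psi>" for \<psi> z
  proof -
    obtain t \<phi> where t: "t \<ge> 0" "\<phi> \<in> B" "z = t * (\<phi>0 f - \<phi> f) + \<eta> * N (\<lambda>g. \<psi> g - t * (\<phi> g - \<phi>0 g))"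
      using tl(2) unfolding T_def by blast
    have \<phi>F: "\<phi> \<in> F" using t(2) by (simp add: B_iff)
    have chF: "(\<lambda>g. \<phi> g - \<phi>0 g) \<in> F" using F_diff_cl[OF \<phi>F \<phi>0F] .
    have tchF: "(\<lambda>g. t * (\<phi> g - \<phi>0 g)) \<in> F" using F_scale_cl[OF chF] .
    have 1: "t * (\<phi>0 f - \<phi> f) \<ge> - t * (\<eta> * N (\<lambda>g. \<phi> g - \<phi>0 g))"
      using mult_left_mono[OF ek[rule_format, OF t(2)] t(1)] by (simp add: algebra_simps)
    have "N (\<lambda>g. t * (\<phi> g - \<phi>0 g)) \<le> N (\<lambda>g. t * (\<phi> g - \<phi>0 g) - \<psi> g) + N (\<lambda>g. \<psi> g - 0)"
      using N_tri[OF tchF tl(1) F_zero] by simp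
    also have "N (\<lambda>g. t * (\<phi> g - \<phi>0 g) - \<psi> g) = N (\<lambda>g. \<psi> g - t * (\<phi> g - \<phi>0 g))"
      using N_sym[OF tchF tl(1)] by simp
    finally have 2: "t * N (\<lambda>g. \<phi> g - \<phi>0 g) \<le> N (\<lambda>g. \<psi> g - t * (\<phi> g - \<phi>0 g)) + N \<psi>"
      using N_scale_eq[OF chF, of t] t(1) by simp
    have "\<eta> * (t * N (\<lambda>g. \<phi> g - \<phi>0 g)) \<le> \<eta> * (N (\<lambda>g. \<psi> g - t * (\<phi> g - \<phi>0 g)) + N \<psi>)"
      using mult_left_mono[OF 2] eta by simp
    then show ?thesis using 1 t(3) by (simp add: algebra_simps)
  qed
  have Tne: "T \<psi> \<noteq> {}" for \<psi> using Tmem[OF _ \<phi>0B, of 0] by blast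
  have Tbdd: "bdd_below (T \<psi>)" if "\<psi> \<in> F" for \<psi>
    using Tlow[OF that] by (intro bdd_belowI[where m="- \<eta> * N \<psi>"]) auto
  have q_le: "q \<psi> \<le> z" if "\<psi> \<in> F" "z \<in> T \<psi>" for \<psi> z
    unfolding q_def using Tbdd[OF that(1)] that(2) by (rule cInf_lower[rotated])
  have q_ge: "z \<le> q \<psi>" if "\<And>w. w \<in> T \<psi> \<Longrightarrow> z \<le> w" for \<psi> z
    unfolding q_def using Tne by (intro cInf_greatest) (auto intro: that)
  have q_N: "q \<psi> \<le> \<eta> * N \<psi>" if "\<psi> \<in> F" for \<psi>
    using q_le[OF that Tmem[OF _ \<phi>0B, of 0 \<psi>]] by simp
  have q_sub: "q (\<lambda>b. x b + y b) \<le> q x + q y" if xy: "x \<in> F" "y \<in> F" for x y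
  proof -
    have "q (\<lambda>b. x b + y b) \<le> z1 + z2" if z: "z1 \<in> T x" "z2 \<in> T y" for z1 z2
    proof -
      obtain t1 \<phi>1 where 1: "t1 \<ge> 0" "\<phi>1 \<in> B" "z1 = t1 * (\<phi>0 f - \<phi>1 f) + \<eta> * N (\<lambda>g. x g - t1 * (\<phi>1 g - \<phi>0 g))"
        using z(1) unfolding T_def by blast
      obtain t2 \<phi>2 where 2: "t2 \<ge> 0" "\<phi>2 \<in> B" "z2 = t2 * (\<phi>0 f - \<phi>2 f) + \<eta> * N (\<lambda>g. y g - t2 * (\<phi>2 g - \<phi>0 g))"
        using z(2) unfolding T_def by blast
      have \<phi>1F: "\<phi>1 \<in> F" "N \<phi>1 \<le> 1" using 1(2) by (auto simp: B_iff)
      have \<phi>2F: "\<phi>2 \<in> F" "N \<phi>2 \<le> 1" using 2(2) by (auto simp: B_iff)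
      have a1F: "(\<lambda>g. x g - t1 * (\<phi>1 g - \<phi>0 g)) \<in> F"
        using F_diff_cl[OF xy(1) F_scale_cl[OF F_diff_cl[OF \<phi>1F(1) \<phi>0F]]] .
      have a2F: "(\<lambda>g. y g - t2 * (\<phi>2 g - \<phi>0 g)) \<in> F"
        using F_diff_cl[OF xy(2) F_scale_cl[OF F_diff_cl[OF \<phi>2F(1) \<phi>0F]]] .
      have Nsum: "N (\<lambda>g. (x g - t1 * (\<phi>1 g - \<phi>0 g)) + (y g - t2 * (\<phi>2 g - \<phi>0 g)))
           \<le> N (\<lambda>g. x g - t1 * (\<phi>1 g - \<phi>0 g)) + N (\<lambda>g. y g - t2 * (\<phi>2 g - \<phi>0 g))"
        using N_add[OF a1F a2F] .
      show ?thesis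
      proof (cases "t1 + t2 = 0")
        case True
        then have t0: "t1 = 0" "t2 = 0" using 1(1) 2(1) by auto
        have "q (\<lambda>b. x b + y b) \<le> 0 * (\<phi>0 f - \<phi>0 f) + \<eta> * N (\<lambda>g. (x g + y g) - 0 * (\<phi>0 g - \<phi>0 g))"
          using q_le[OF F_add_cl[OF xy] Tmem[OF _ \<phi>0B, of 0]] by simp
        also have "\<dots> = \<eta> * N (\<lambda>g. (x g - t1 * (\<phi>1 g - \<phi>0 g)) + (y g - t2 * (\<phi>2 g - \<phi>0 g)))"
          using t0 by simp
        also have "\<dots> \<le> \<eta> * (N (\<lambda>g. x g - t1 * (\<phi>1 g - \<phi>0 g)) + N (\<lambda>g. y g - t2 * (\<phi>2 g - \<phi>0 g)))"
          using Nsum eta by (simp add: mult_left_mono)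
        also have "\<dots> = z1 + z2" using 1(3) 2(3) t0 by (simp add: algebra_simps)
        finally show ?thesis .
      next
        case False
        define t where "t = t1 + t2"
        have tpos: "t > 0" using False 1(1) 2(1) unfolding t_def by simp
        define \<phi> where "\<phi> = (\<lambda>g. (t1 / t) * \<phi>1 g + (t2 / t) * \<phi>2 g)"
        have \<phi>F: "\<phi> \<in> F" unfolding \<phi>_def using F_add_cl[OF F_scale_cl[OF \<phi>1F(1)] F_scale_cl[OF \<phi>2F(1)]] .
        have "N \<phi> \<le> N (\<lambda>g. (t1 / t) * \<phi>1 g) + N (\<lambda>g. (t2 / t) * \<phi>2 g)"
          unfolding \<phi>_def using N_add[OF F_scale_cl[OF \<phi>1F(1)] F_scale_cl[OF \<phi>2F(1)]] .
        also have "\<dots> = (t1 / t) * N \<phi>1 + (t2 / t) * N \<phi>2"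
          using N_scale_eq[OF \<phi>1F(1), of "t1 / t"] N_scale_eq[OF \<phi>2F(1), of "t2 / t"] 1(1) 2(1) tpos by simp
        also have "\<dots> \<le> (t1 / t) * 1 + (t2 / t) * 1"
          using \<phi>1F(2) \<phi>2F(2) 1(1) 2(1) tpos by (intro add_mono mult_left_mono) auto
        also have "\<dots> = (t1 + t2) / t" using tpos by (simp add: add_divide_distrib)
        also have "\<dots> = 1" using tpos unfolding t_def by simp
        finally have \<phi>B: "\<phi> \<in> B" using \<phi>F by (simp add: B_iff)
        have tt: "t * c = t1 * c + t2 * c" for c unfolding t_def by (simp add: algebra_simps)
        have e1: "t * (\<phi> g - \<phi>0 g) = t1 * (\<phi>1 g - \<phi>0 g) + t2 * (\<phi>2 g - \<phi>0 g)" for g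
        proof -
          have "t * (\<phi> g - \<phi>0 g) = t1 * \<phi>1 g + t2 * \<phi>2 g - t * \<phi>0 g"
            unfolding \<phi>_def using tpos by (simp add: field_simps)
          then show ?thesis using tt[of "\<phi>0 g"] by (simp add: algebra_simps)
        qed
        have e2: "t * (\<phi>0 f - \<phi> f) = t1 * (\<phi>0 f - \<phi>1 f) + t2 * (\<phi>0 f - \<phi>2 f)"
        proof -
          have "t * (\<phi>0 f - \<phi> f) = t * \<phi>0 f - (t1 * \<phi>1 f + t2 * \<phi>2 f)"
            unfolding \<phi>_def using tpos by (simp add: field_simps)
          then show ?thesis using tt[of "\<phi>0 f"] by (simp add: algebra_simps)
        qed
        have e3: "(\<lambda>g. (x g + y g) - t * (\<phi> g - \<phi>0 g)) = (\<lambda>g. (x g - t1 * (\<phi>1 g - \<phi>0 g)) + (y g - t2 * (\<phi>2 g - \<phi>0 g)))"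
          using e1 by (simp add: fun_eq_iff algebra_simps)
        have "q (\<lambda>b. x b + y b) \<le> t * (\<phi>0 f - \<phi> f) + \<eta> * N (\<lambda>g. (x g + y g) - t * (\<phi> g - \<phi>0 g))"
          using q_le[OF F_add_cl[OF xy] Tmem[OF _ \<phi>B, of t]] tpos by simp
        also have "\<dots> \<le> t1 * (\<phi>0 f - \<phi>1 f) + t2 * (\<phi>0 f - \<phi>2 f)
            + \<eta> * (N (\<lambda>g. x g - t1 * (\<phi>1 g - \<phi>0 g)) + N (\<lambda>g. y g - t2 * (\<phi>2 g - \<phi>0 g)))"
          unfolding e2 e3 using Nsum eta by (simp add: mult_left_mono)
        also have "\<dots> = z1 + z2" using 1(3) 2(3) by (simp add: algebra_simps)
        finally show ?thesis .
      qed
    qed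
    then have "q (\<lambda>b. x b + y b) - z2 \<le> q x" if "z2 \<in> T y" for z2
      using that by (intro q_ge) (simp add: algebra_simps)
    then have "q (\<lambda>b. x b + y b) - q x \<le> q y"
      by (intro q_ge) (simp add: algebra_simps)
    then show ?thesis by simp
  qed
  have q_hom_le: "q (\<lambda>b. c * x b) \<le> c * q x" if "x \<in> F" "c > 0" for x c
  proof -
    have "q (\<lambda>b. c * x b) \<le> c * z" if z: "z \<in> T x" for z
    proof -
      obtain t \<phi> where t: "t \<ge> 0" "\<phi> \<in> B" "z = t * (\<phi>0 f - \<phi> f) + \<eta> * N (\<lambda>g. x g - t * (\<phi> g - \<phi>0 g))"
        using z unfolding T_def by blast
      have \<phi>F: "\<phi> \<in> F" using t(2) by (simp add: B_iff)
      have aF: "(\<lambda>g. x g - t * (\<phi> g - \<phi>0 g)) \<in> F"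
        using F_diff_cl[OF \<open>x \<in> F\<close> F_scale_cl[OF F_diff_cl[OF \<phi>F \<phi>0F]]] .
      have "(\<lambda>g. c * x g - (c * t) * (\<phi> g - \<phi>0 g)) = (\<lambda>g. c * (x g - t * (\<phi> g - \<phi>0 g)))"
        by (simp add: fun_eq_iff algebra_simps)
      then have Neq: "N (\<lambda>g. c * x g - (c * t) * (\<phi> g - \<phi>0 g)) = c * N (\<lambda>g. x g - t * (\<phi> g - \<phi>0 g))"
        using N_scale_eq[OF aF, of c] \<open>c > 0\<close> by simp
      have "q (\<lambda>b. c * x b) \<le> (c * t) * (\<phi>0 f - \<phi> f) + \<eta> * N (\<lambda>g. c * x g - (c * t) * (\<phi> g - \<phi>0 g))"
        using q_le[OF F_scale_cl[OF \<open>x \<in> F\<close>] Tmem[OF _ t(2), of "c * t"]] t(1) \<open>c > 0\<close> by simp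
      also have "\<dots> = (c * t) * (\<phi>0 f - \<phi> f) + \<eta> * (c * N (\<lambda>g. x g - t * (\<phi> g - \<phi>0 g)))"
        by (simp only: Neq)
      also have "\<dots> = c * z" unfolding t(3) by (simp add: algebra_simps)
      finally show ?thesis .
    qed
    note qz = this
    have "q (\<lambda>b. c * x b) / c \<le> z" if zT: "z \<in> T x" for z
    proof -
      have "q (\<lambda>b. c * x b) \<le> z * c" using qz[OF zT] by (simp add: mult.commute)
      then show ?thesis using \<open>c > 0\<close> by (simp add: pos_divide_le_eq)
    qed
    then have "q (\<lambda>b. c * x b) / c \<le> q x" by (intro q_ge)
    then have "q (\<lambda>b. c * x b) \<le> q x * c" using \<open>c > 0\<close> by (simp add: pos_divide_le_eq)
    then show ?thesis by (simp add: mult.commute)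
  qed
  have q_hom: "q (\<lambda>b. c * x b) = c * q x" if "x \<in> F" "c > 0" for x c
  proof -
    have "q x = q (\<lambda>b. (1 / c) * (c * x b))" using \<open>c > 0\<close> by simp
    also have "\<dots> \<le> (1 / c) * q (\<lambda>b. c * x b)"
      by (rule q_hom_le[OF F_scale_cl[OF that(1), of c]]) (use that(2) in simp)
    finally have "c * q x \<le> q (\<lambda>b. c * x b)" using that(2) by (simp add: field_simps)
    then show ?thesis using q_hom_le[OF that] by simp
  qed
  obtain h where hadd: "\<forall>x\<in>F. \<forall>y\<in>F. h (\<lambda>b. x b + y b) = h x + h y"
    and hsc: "\<forall>x\<in>F. \<forall>c. h (\<lambda>b. c * x b) = c * h x" and hq: "\<forall>x\<in>F. h x \<le> q x"
    using HB[of F q, OF F_zero F_add_cl F_scale_cl q_sub q_hom] by blast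
  have hdiff: "h (\<lambda>b. x b - y b) = h x - h y" if "x \<in> F" "y \<in> F" for x y
  proof -
    have "h (\<lambda>b. x b + (\<lambda>b. (-1) * y b) b) = h x + h (\<lambda>b. (-1) * y b)"
      by (rule hadd[rule_format, OF that(1) F_scale_cl[OF that(2)]])
    moreover have "h (\<lambda>b. (-1) * y b) = (-1) * h y" by (rule hsc[rule_format, OF that(2)])
    ultimately show ?thesis by simp
  qed
  have hN: "h x \<le> \<eta> * N x" if "x \<in> F" for x using hq q_N that by fastforce
  have habs: "\<bar>h x\<bar> \<le> \<eta> * N x" if "x \<in> F" for x
  proof -
    have "h (\<lambda>b. (-1) * x b) = (-1) * h x" by (rule hsc[rule_format, OF that])
    moreover have "h (\<lambda>b. (-1) * x b) \<le> \<eta> * N (\<lambda>b. (-1) * x b)" by (rule hN[OF F_scale_cl[OF that]])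
    moreover have "N (\<lambda>b. (-1) * x b) = N x" using N_scale_eq[OF that, of "-1"] by simp
    ultimately show ?thesis using hN[OF that] by (simp add: abs_le_iff)
  qed
  have hB: "h (\<lambda>g. \<phi> g - \<phi>0 g) \<le> \<phi>0 f - \<phi> f" if \<phi>B: "\<phi> \<in> B" for \<phi>
  proof -
    have \<phi>F: "\<phi> \<in> F" using \<phi>B by (simp add: B_iff)
    have xF: "(\<lambda>g. \<phi> g - \<phi>0 g) \<in> F" using F_diff_cl[OF \<phi>F \<phi>0F] .
    have "q (\<lambda>g. \<phi> g - \<phi>0 g) \<le> 1 * (\<phi>0 f - \<phi> f) + \<eta> * N (\<lambda>g. (\<phi> g - \<phi>0 g) - 1 * (\<phi> g - \<phi>0 g))"
      by (rule q_le[OF xF Tmem[OF _ \<phi>B]]) simp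
    also have "(\<lambda>g. (\<phi> g - \<phi>0 g) - 1 * (\<phi> g - \<phi>0 g)) = (\<lambda>_. 0)" by simp
    finally show ?thesis using N_zero hq xF by fastforce
  qed
  define g0 where "g0 x = (if x \<in> M then h (delta M d p x) else 0)" for x
  have g0lip: "\<bar>g0 x - g0 y\<bar> \<le> \<eta> * d x y" if "x \<in> M" "y \<in> M" for x y
  proof -
    have dF: "delta M d p x \<in> F" "delta M d p y \<in> F" using delta_F that by auto
    have "g0 x - g0 y = h (\<lambda>b. delta M d p x b - delta M d p y b)"
      using hdiff[OF dF] that unfolding g0_def by simp
    also have "\<bar>\<dots>\<bar> \<le> \<eta> * N (\<lambda>b. delta M d p x b - delta M d p y b)"
      using habs F_diff_cl[OF dF] by blast
    also have "N (\<lambda>b. delta M d p x b - delta M d p y b) \<le> d x y"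
    proof (rule N_by_bound)
      fix f assume "f \<in> L"
      then show "\<bar>delta M d p x f - delta M d p y f\<bar> \<le> d x y * nrm f"
        using nrm_lip[OF _ that] by (simp add: delta_L mult.commute)
    qed simp
    then have "\<eta> * N (\<lambda>b. delta M d p x b - delta M d p y b) \<le> \<eta> * d x y" using eta by simp
    finally show ?thesis .
  qed
  have dp0: "delta M d p p = (\<lambda>_. 0)" by (auto simp: delta_def fun_eq_iff L_p)
  have h0: "h (\<lambda>_. 0) = 0" using hsc[rule_format, OF F_zero, of 0] by simp
  have g0L: "g0 \<in> L"
  proof -
    have "g0 p = 0" unfolding g0_def using pM dp0 h0 by simp
    moreover have "\<forall>x. x \<notin> M \<longrightarrow> g0 x = 0" unfolding g0_def by simp
    ultimately show ?thesis unfolding Lip0_def using g0lip by blast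
  qed
  have g0nrm: "nrm g0 \<le> \<eta>" using g0lip eta by (intro nrm_le) auto
  have rep: "\<phi> g0 = h \<phi>" if \<phi>F: "\<phi> \<in> F" for \<phi>
  proof -
    have "\<phi> g0 - h \<phi> = 0"
    proof (rule zero_by_eps[of _ "nrm g0 + \<eta>"])
      fix e :: real assume e: "e > 0"
      obtain \<psi> where \<psi>: "\<psi> \<in> delta_span M d p" "\<forall>f\<in>L. \<bar>\<phi> f - \<psi> f\<bar> \<le> e * nrm f"
        using F_approx[OF \<phi>F e] by blast
      obtain S a where S: "finite S" "S \<subseteq> M" "\<psi> = (\<lambda>f. \<Sum>x\<in>S. a x * delta M d p x f)"
        using \<psi>(1) unfolding delta_span_def by blast
      have \<psi>F: "\<psi> \<in> F" using span_F[OF \<psi>(1)] .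
      have "h \<psi> = (\<Sum>x\<in>S. a x * h (delta M d p x))" unfolding S(3) by (rule h_span[OF hadd hsc S(1,2)])
      also have "\<dots> = (\<Sum>x\<in>S. a x * g0 x)" using S(2) unfolding g0_def by (intro sum.cong) auto
      also have "\<dots> = \<psi> g0" unfolding S(3) using g0L by (simp add: delta_L)
      finally have eq: "h \<psi> = \<psi> g0" .
      have a: "\<bar>\<phi> g0 - \<psi> g0\<bar> \<le> e * nrm g0" using \<psi>(2) g0L by blast
      have "N (\<lambda>b. \<phi> b - \<psi> b) \<le> e" using \<psi>(2) e by (intro N_by_bound) auto
      then have "\<bar>h (\<lambda>b. \<phi> b - \<psi> b)\<bar> \<le> \<eta> * e"
        using habs[OF F_diff_cl[OF \<phi>F \<psi>F]] eta by (smt (verit) mult_left_mono)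
      then have b: "\<bar>h \<phi> - h \<psi>\<bar> \<le> e * \<eta>" using hdiff[OF \<phi>F \<psi>F] by (simp add: mult.commute)
      have "\<bar>\<phi> g0 - h \<phi>\<bar> \<le> \<bar>\<phi> g0 - \<psi> g0\<bar> + \<bar>h \<phi> - h \<psi>\<bar>"
        using eq abs_triangle_ineq[of "\<phi> g0 - \<psi> g0" "h \<psi> - h \<phi>"] by (simp add: abs_minus_commute)
      also have "\<dots> \<le> e * nrm g0 + e * \<eta>" using a b by (rule add_mono)
      finally show "\<bar>\<phi> g0 - h \<phi>\<bar> \<le> e * (nrm g0 + \<eta>)" by (simp add: distrib_left)
    qed (use nrm_nonneg[OF g0L] eta in simp)
    then show ?thesis by simp
  qed
  define G where "G = (\<lambda>x. f x + g0 x)"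
  have GL: "G \<in> L" unfolding G_def using L_add[OF f g0L] .
  have Gval: "\<phi> G = \<phi> f + h \<phi>" if "\<phi> \<in> F" for \<phi>
    unfolding G_def using F_add[OF that f g0L] rep[OF that] by simp
  have Gmax: "\<phi> G \<le> \<phi>0 G" if \<phi>B: "\<phi> \<in> B" for \<phi>
  proof -
    have \<phi>F: "\<phi> \<in> F" using \<phi>B by (simp add: B_iff)
    have "h \<phi> - h \<phi>0 \<le> \<phi>0 f - \<phi> f" using hB[OF \<phi>B] hdiff[OF \<phi>F \<phi>0F] by simp
    then show ?thesis using Gval[OF \<phi>F] Gval[OF \<phi>0F] by simp
  qed
  have K0: "0 \<le> \<phi>0 G"
  proof -
    have "(\<lambda>_. 0) \<in> B" using F_zero N_zero by (simp add: B_iff)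
    then show ?thesis using Gmax by fastforce
  qed
  have "nrm G \<le> \<phi>0 G"
  proof (rule nrm_le[OF K0])
    fix x y assume xy: "x \<in> M" "y \<in> M" "x \<noteq> y"
    have pos: "d x y > 0" using xy mdist_pos_less by auto
    have "molecule M d p x y G \<le> \<phi>0 G" using Gmax mol_B xy by blast
    moreover have "molecule M d p y x G \<le> \<phi>0 G" using Gmax mol_B xy by blast
    ultimately have "(G x - G y) / d x y \<le> \<phi>0 G" "(G y - G x) / d x y \<le> \<phi>0 G"
      using mol_val[OF GL] commute[of x y] by auto
    then have "G x - G y \<le> \<phi>0 G * d x y" "G y - G x \<le> \<phi>0 G * d x y"
      using pos by (simp_all add: divide_le_eq)
    then show "\<bar>G x - G y\<bar> \<le> \<phi>0 G * d x y" by (simp add: abs_le_iff)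
  qed
  moreover have "\<phi>0 G \<le> nrm G" using B_val_le[OF \<phi>0B GL] .
  ultimately have "\<bar>\<phi>0 G\<bar> = nrm G" using K0 by simp
  then have "G \<in> NA_free M d p" unfolding NA_free_def using GL \<phi>0B by blast
  then have GS: "G \<in> Lip_SNA M d p" using NA_sub_SNA[OF KMP H4] by blast
  have "nrm (\<lambda>x. f x - G x) \<le> \<eta>"
  proof (rule nrm_le)
    fix x y assume "x \<in> M" "y \<in> M" "x \<noteq> y"
    then show "\<bar>(f x - G x) - (f y - G y)\<bar> \<le> \<eta> * d x y"
      using g0lip[of x y] unfolding G_def by (simp add: abs_minus_commute)
  qed (use eta in simp)
  then have "nrm (\<lambda>x. f x - G x) < \<epsilon>" using eps unfolding \<eta>_def by simp
  then show ?thesis using GS by blast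
qed

end

theorem proposition7p1:
  fixes M :: "'a set" and d :: "'a \<Rightarrow> 'a \<Rightarrow> real" and p :: 'a
  assumes "Metric_space M d" and "p \<in> M"
    and "free_KMP M d p"
    and "\<forall>e. fextreme_point (free_ball M d p) e \<longrightarrow>
           (\<exists>x\<in>M. \<exists>y\<in>M. x \<noteq> y \<and> e = molecule M d p x y)"
  shows "NA_free M d p = Lip_SNA M d p \<and>
         (\<forall>f\<in>Lip0 M d p. \<forall>\<epsilon>>0. \<exists>g\<in>Lip_SNA M d p. lipnorm M d (\<lambda>x. f x - g x) < \<epsilon>)"
proof -
  interpret LF M d p using assms(1,2) by (intro LF.intro LF_axioms.intro)
  show ?thesis
    using NA_sub_SNA[OF assms(3) assms(4)] SNA_sub_NA density[OF assms(3) assms(4)] by blast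
qed

end
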